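(* For $i=0,1$ let $\mathcal L_i$ be a cabled linkage in $\mathbb R^n$ which is (strongly) functional for $f_i\colon(\mathbb R^n)^{k_i}\to(\mathbb R^n)^{m_i}$ with restricted domain $U_i$. Let $\mathcal L$ be the disjoint union of $\mathcal L_0$ and $\mathcal L_1$ (with input and output vertices those of $\mathcal L_0$ followed by those of $\mathcal L_1$). Then: (1) $\mathcal L$ is (strongly) functional for $f_0\times f_1\colon(\mathbb R^n)^{k_0}\times(\mathbb R^n)^{k_1}\to(\mathbb R^n)^{m_0}\times(\mathbb R^n)^{m_1}$ with restricted domain $U_0\times U_1$; (2) if $k_0=k_1$, and $\mathcal L'$ is obtained from $\mathcal L$ by identifying the $j$-th input vertex of $\mathcal L_0$ with the $j$-th input vertex of $\mathcal L_1$ for each $j$, then $\mathcal L'$ is (strongly) functional for $(f_0,f_1)\colon(\mathbb R^n)^{k_0}\to(\mathbb R^n)^{m_0}\times(\mathbb R^n)^{m_1}$ with restricted domain $U_0\cap U_1$.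
   Context: A cabled linkage in $\mathbb R^n$ is $\mathcal L=(L,\ell,V,\mu,F)$: $L$ a finite one-dimensional simplicial complex (vertex set $\mathcal V(L)$, edge set $\mathcal E(L)$), $\ell\colon\mathcal E(L)\to(0,\infty)$, $V\subset\mathcal V(L)$ fixed vertices, $\mu\colon V\to\mathbb R^n$, $F\subset\mathcal E(L)$ flexible edges. $\mathcal C(\mathcal L)=\{\varphi\colon\mathcal V(L)\to\mathbb R^n\mid\varphi(v)=\mu(v)\ (v\in V),\ |\varphi(v)-\varphi(w)|\le\ell(vw)\ (vw\in F),\ |\varphi(v)-\varphi(w)|=\ell(vw)\ (vw\in\mathcal E(L)\setminus F)\}$. $\mathcal L$ is quasifunctional for $f\colon(\mathbb R^n)^k\to(\mathbb R^n)^m$ if there are vertices $w_1,\dots,w_k$ (input) and $v_1,\dots,v_m$ (output), repetitions allowed, with input map $q(\varphi)=(\varphi(w_1),\dots,\varphi(w_k))$, output map $p(\varphi)=(\varphi(v_1),\dots,\varphi(v_m))$ and $p=f\circ q$; its domain is $q(\mathcal C(\mathcal L))$. It is functional with restricted domain $U\subset q(\mathcal C(\mathcal L))$ if there are a finite set $E$ and an analytic isomorphism $\sigma\colon U\times E\to q^{-1}(U)$ with $q(\sigma(u,c))=u$; strongly functional if $q\colon\mathcal C(\mathcal L)\to q(\mathcal C(\mathcal L))$ is an analytic isomorphism, and strongly functional with restricted domain $U$ if also $U\subset q(\mathcal C(\mathcal L))$. An analytic isomorphism is a homeomorphism $h$ with $h,h^{-1}$ restrictions of analytic maps. *)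

theory Defs
  imports "HOL-Analysis.Analysis"
begin

text \<open>A map G between Euclidean spaces is real analytic on W if around every point
  x0 of W it is given by an (unconditionally, hence absolutely) convergent
  multivariate power series in the coordinates of x - x0.\<close>
definition real_analytic_on :: "('a::euclidean_space \<Rightarrow> 'b::euclidean_space) \<Rightarrow> 'a set \<Rightarrow> bool" where
  "real_analytic_on G W \<longleftrightarrow>
     (\<forall>x0\<in>W. \<exists>r>0. ball x0 r \<subseteq> W \<and> (\<exists>c :: ('a \<Rightarrow> nat) \<Rightarrow> 'b. \<forall>x\<in>ball x0 r.
        ((\<lambda>\<alpha>. (\<Prod>b\<in>Basis. ((x - x0) \<bullet> b) ^ \<alpha> b) *\<^sub>R c \<alpha>) has_sum G x)
          {\<alpha>. \<forall>b. b \<notin> Basis \<longrightarrow> \<alpha> b = 0}))"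

definition analytic_map_on :: "('a::euclidean_space \<Rightarrow> 'b::euclidean_space) \<Rightarrow> 'a set \<Rightarrow> bool" where
  "analytic_map_on h S \<longleftrightarrow>
     (\<forall>x\<in>S. \<exists>W G. open W \<and> x \<in> W \<and> real_analytic_on G W \<and> (\<forall>y\<in>S \<inter> W. G y = h y))"

definition analytic_iso :: "'a::euclidean_space set \<Rightarrow> 'b::euclidean_space set \<Rightarrow> ('a \<Rightarrow> 'b) \<Rightarrow> bool" where
  "analytic_iso S T h \<longleftrightarrow>
     (\<exists>g. homeomorphism S T h g \<and> analytic_map_on h S \<and> analytic_map_on g T)"

text \<open>Vertices are a subset of a finite type 'a; edges are indexed by a set of labels
  of type 'e, each with its ordered pair of endpoints; pins = graph of \<mu> on the
  set V of fixed vertices.\<close>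
record ('a, 'e, 'p) linkage =
  verts :: "'a set"
  edges :: "'e set"
  ends  :: "'e \<Rightarrow> 'a \<times> 'a"
  len   :: "'e \<Rightarrow> real"
  flex  :: "'e set"
  pins  :: "('a \<times> 'p) set"

definition cabled_linkage :: "('a, 'e, 'p) linkage \<Rightarrow> bool" where
  "cabled_linkage L \<longleftrightarrow>
     finite (verts L) \<and> finite (edges L) \<and>
     (\<forall>e\<in>edges L. fst (ends L e) \<in> verts L \<and> snd (ends L e) \<in> verts L \<and>
                  fst (ends L e) \<noteq> snd (ends L e) \<and> len L e > 0) \<and>
     (\<forall>e\<in>edges L. \<forall>e'\<in>edges L.
        {fst (ends L e), snd (ends L e)} = {fst (ends L e'), snd (ends L e')} \<longrightarrow> e = e') \<and>
     flex L \<subseteq> edges L \<and> fst ` pins L \<subseteq> verts L \<and>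
     (\<forall>v x y. (v, x) \<in> pins L \<longrightarrow> (v, y) \<in> pins L \<longrightarrow> x = y)"

text \<open>Configuration space; a configuration is a map from the vertex set to R^n,
  encoded as a vector indexed by the finite vertex type, equal to 0 off the vertex set.\<close>
definition conf :: "('a::finite, 'e, real^'n) linkage \<Rightarrow> ((real^'n)^'a) set" where
  "conf L = {\<phi>. (\<forall>v. v \<notin> verts L \<longrightarrow> \<phi> $ v = 0) \<and>
                (\<forall>(v, x)\<in>pins L. \<phi> $ v = x) \<and>
                (\<forall>e\<in>flex L. dist (\<phi> $ fst (ends L e)) (\<phi> $ snd (ends L e)) \<le> len L e) \<and>
                (\<forall>e\<in>edges L - flex L. dist (\<phi> $ fst (ends L e)) (\<phi> $ snd (ends L e)) = len L e)}"

definition evmap :: "('k \<Rightarrow> 'a) \<Rightarrow> (real^'n)^'a \<Rightarrow> (real^'n)^'k" where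
  "evmap ws \<phi> = (\<chi> j. \<phi> $ ws j)"

definition quasifunctional ::
  "('a::finite, 'e, real^'n) linkage \<Rightarrow> ('k::finite \<Rightarrow> 'a) \<Rightarrow> ('m::finite \<Rightarrow> 'a)
     \<Rightarrow> ((real^'n)^'k \<Rightarrow> (real^'n)^'m) \<Rightarrow> bool" where
  "quasifunctional L ws vs f \<longleftrightarrow>
     range ws \<subseteq> verts L \<and> range vs \<subseteq> verts L \<and>
     (\<forall>\<phi>\<in>conf L. evmap vs \<phi> = f (evmap ws \<phi>))"

definition functional_rd ::
  "('a::finite, 'e, real^'n) linkage \<Rightarrow> ('k::finite \<Rightarrow> 'a) \<Rightarrow> ('m::finite \<Rightarrow> 'a)
     \<Rightarrow> ((real^'n)^'k \<Rightarrow> (real^'n)^'m) \<Rightarrow> ((real^'n)^'k) set \<Rightarrow> bool" where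
  "functional_rd L ws vs f U \<longleftrightarrow>
     quasifunctional L ws vs f \<and> U \<subseteq> evmap ws ` conf L \<and>
     (\<exists>(E :: real set) \<sigma>. finite E \<and>
        analytic_iso (U \<times> E) {\<phi>\<in>conf L. evmap ws \<phi> \<in> U} \<sigma> \<and>
        (\<forall>u\<in>U. \<forall>c\<in>E. evmap ws (\<sigma> (u, c)) = u))"

definition strongly_functional_rd ::
  "('a::finite, 'e, real^'n) linkage \<Rightarrow> ('k::finite \<Rightarrow> 'a) \<Rightarrow> ('m::finite \<Rightarrow> 'a)
     \<Rightarrow> ((real^'n)^'k \<Rightarrow> (real^'n)^'m) \<Rightarrow> ((real^'n)^'k) set \<Rightarrow> bool" where
  "strongly_functional_rd L ws vs f U \<longleftrightarrow>
     quasifunctional L ws vs f \<and>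
     analytic_iso (conf L) (evmap ws ` conf L) (evmap ws) \<and>
     U \<subseteq> evmap ws ` conf L"

definition disj_union :: "('a, 'e, 'p) linkage \<Rightarrow> ('b, 'f, 'p) linkage \<Rightarrow> ('a + 'b, 'e + 'f, 'p) linkage" where
  "disj_union L0 L1 = \<lparr> verts = Inl ` verts L0 \<union> Inr ` verts L1,
     edges = Inl ` edges L0 \<union> Inr ` edges L1,
     ends = case_sum (\<lambda>e. map_prod Inl Inl (ends L0 e)) (\<lambda>e. map_prod Inr Inr (ends L1 e)),
     len = case_sum (len L0) (len L1),
     flex = Inl ` flex L0 \<union> Inr ` flex L1,
     pins = map_prod Inl id ` pins L0 \<union> map_prod Inr id ` pins L1 \<rparr>"

definition push_linkage :: "('a \<Rightarrow> 'c) \<Rightarrow> ('a, 'e, 'p) linkage \<Rightarrow> ('c, 'e, 'p) linkage" where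
  "push_linkage \<pi> L = \<lparr> verts = \<pi> ` verts L, edges = edges L,
     ends = (\<lambda>e. map_prod \<pi> \<pi> (ends L e)), len = len L, flex = flex L,
     pins = map_prod \<pi> id ` pins L \<rparr>"

definition is_identification :: "('a \<Rightarrow> 'c) \<Rightarrow> 'a set \<Rightarrow> ('a \<times> 'a) set \<Rightarrow> bool" where
  "is_identification \<pi> D R \<longleftrightarrow> (\<forall>x\<in>D. \<forall>y\<in>D. \<pi> x = \<pi> y \<longleftrightarrow> (x, y) \<in> (R \<union> R\<inverse>)\<^sup>*)"

definition vjoin :: "'p^'k::finite \<Rightarrow> 'p^'l::finite \<Rightarrow> 'p^('k + 'l)" where
  "vjoin x y = (\<chi> i. case i of Inl j \<Rightarrow> x $ j | Inr j \<Rightarrow> y $ j)"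

definition vleft :: "'p^('k::finite + 'l::finite) \<Rightarrow> 'p^'k" where
  "vleft z = (\<chi> j. z $ Inl j)"

definition vright :: "'p^('k::finite + 'l::finite) \<Rightarrow> 'p^'l" where
  "vright z = (\<chi> j. z $ Inr j)"

end

theory Submission
  imports Defs
begin

definition mono_b :: "'a::euclidean_space \<Rightarrow> ('a \<Rightarrow> nat) \<Rightarrow> real" where
  "mono_b x \<alpha> = (\<Prod>b\<in>Basis. (x \<bullet> b) ^ \<alpha> b)"

definition MI :: "('a::euclidean_space \<Rightarrow> nat) set" where
  "MI = {\<alpha>. \<forall>b. b \<notin> Basis \<longrightarrow> \<alpha> b = 0}"

lemma rao_alt:
  "real_analytic_on G W \<longleftrightarrow>
     (\<forall>x0\<in>W. \<exists>r>0. ball x0 r \<subseteq> W \<and> (\<exists>c. \<forall>x\<in>ball x0 r.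
        ((\<lambda>\<alpha>. mono_b (x - x0) \<alpha> *\<^sub>R c \<alpha>) has_sum G x) MI))"
  unfolding real_analytic_on_def mono_b_def MI_def by simp

lemma rao_open: "real_analytic_on G W \<Longrightarrow> open W"
  unfolding rao_alt open_contains_ball by blast

lemma rao_mono:
  assumes "real_analytic_on G W" "open W'" "W' \<subseteq> W"
  shows "real_analytic_on G W'"
  unfolding rao_alt
proof
  fix x0 assume x0: "x0 \<in> W'"
  then obtain r c where r: "r > 0" "ball x0 r \<subseteq> W"
    "\<forall>x\<in>ball x0 r. ((\<lambda>\<alpha>. mono_b (x - x0) \<alpha> *\<^sub>R c \<alpha>) has_sum G x) MI"
    using assms unfolding rao_alt by blast
  obtain r' where r': "r' > 0" "ball x0 r' \<subseteq> W'" using assms(2) x0 open_contains_ball by blast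
  show "\<exists>r>0. ball x0 r \<subseteq> W' \<and> (\<exists>c. \<forall>x\<in>ball x0 r.
        ((\<lambda>\<alpha>. mono_b (x - x0) \<alpha> *\<^sub>R c \<alpha>) has_sum G x) MI)"
    apply (rule exI[of _ "min r r'"])
    apply (intro conjI exI[of _ c])
    using r r' by auto
qed

lemma rao_add:
  assumes "real_analytic_on F W" "real_analytic_on G W"
  shows "real_analytic_on (\<lambda>x. F x + G x) W"
  unfolding rao_alt
proof
  fix x0 assume x0: "x0 \<in> W"
  obtain r c where r: "r > 0" "ball x0 r \<subseteq> W"
    "\<forall>x\<in>ball x0 r. ((\<lambda>\<alpha>. mono_b (x - x0) \<alpha> *\<^sub>R c \<alpha>) has_sum F x) MI"
    using assms x0 unfolding rao_alt by blast
  obtain r' d where r': "r' > 0" "ball x0 r' \<subseteq> W"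
    "\<forall>x\<in>ball x0 r'. ((\<lambda>\<alpha>. mono_b (x - x0) \<alpha> *\<^sub>R d \<alpha>) has_sum G x) MI"
    using assms x0 unfolding rao_alt by blast
  show "\<exists>r>0. ball x0 r \<subseteq> W \<and> (\<exists>c. \<forall>x\<in>ball x0 r.
        ((\<lambda>\<alpha>. mono_b (x - x0) \<alpha> *\<^sub>R c \<alpha>) has_sum F x + G x) MI)"
  proof (intro exI conjI ballI)
    show "min r r' > 0" "ball x0 (min r r') \<subseteq> W" using r r' by auto
    fix x assume "x \<in> ball x0 (min r r')"
    then have "((\<lambda>\<alpha>. mono_b (x - x0) \<alpha> *\<^sub>R c \<alpha> + mono_b (x - x0) \<alpha> *\<^sub>R d \<alpha>) has_sum F x + G x) MI"
      using r r' by (intro has_sum_add) auto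
    then show "((\<lambda>\<alpha>. mono_b (x - x0) \<alpha> *\<^sub>R (c \<alpha> + d \<alpha>)) has_sum F x + G x) MI"
      by (simp add: scaleR_add_right)
  qed
qed

lemma rao_linear:
  assumes "real_analytic_on G W" "linear L"
  shows "real_analytic_on (\<lambda>x. L (G x)) W"
  unfolding rao_alt
proof
  fix x0 assume x0: "x0 \<in> W"
  obtain r c where r: "r > 0" "ball x0 r \<subseteq> W"
    "\<forall>x\<in>ball x0 r. ((\<lambda>\<alpha>. mono_b (x - x0) \<alpha> *\<^sub>R c \<alpha>) has_sum G x) MI"
    using assms x0 unfolding rao_alt by blast
  have bl: "bounded_linear L" using assms(2) linear_conv_bounded_linear by blast
  show "\<exists>r>0. ball x0 r \<subseteq> W \<and> (\<exists>c. \<forall>x\<in>ball x0 r.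
        ((\<lambda>\<alpha>. mono_b (x - x0) \<alpha> *\<^sub>R c \<alpha>) has_sum L (G x)) MI)"
  proof (intro exI conjI ballI)
    show "r > 0" "ball x0 r \<subseteq> W" using r by auto
    fix x assume "x \<in> ball x0 r"
    then have "((\<lambda>\<alpha>. L (mono_b (x - x0) \<alpha> *\<^sub>R c \<alpha>)) has_sum L (G x)) MI"
      using r by (intro has_sum_bounded_linear[OF bl]) auto
    then show "((\<lambda>\<alpha>. mono_b (x - x0) \<alpha> *\<^sub>R L (c \<alpha>)) has_sum L (G x)) MI"
      using assms(2) by (simp add: linear_scale)
  qed
qed

definition delta_b :: "'a \<Rightarrow> 'a \<Rightarrow> nat" where
  "delta_b b = (\<lambda>b'. if b' = b then 1 else 0)"

lemma mono_b_zero[simp]: "mono_b y (\<lambda>_. 0) = 1"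
  by (simp add: mono_b_def)

lemma mono_b_delta: "b \<in> Basis \<Longrightarrow> mono_b y (delta_b b) = y \<bullet> b"
proof -
  assume b: "b \<in> Basis"
  have "mono_b y (delta_b b) = (\<Prod>b'\<in>Basis. if b' = b then y \<bullet> b' else 1)"
    unfolding mono_b_def delta_b_def by (intro prod.cong) auto
  also have "\<dots> = y \<bullet> b" using b by (simp add: prod.delta)
  finally show ?thesis .
qed

lemma delta_b_inj: "inj delta_b"
  unfolding delta_b_def inj_def by (metis zero_neq_one)

lemma delta_b_ne0: "delta_b b \<noteq> (\<lambda>_. 0)"
  unfolding delta_b_def by (metis zero_neq_one)

lemma delta_b_ne0': "(\<lambda>_. 0) \<noteq> delta_b b"
  unfolding delta_b_def fun_eq_iff by (metis zero_neq_one)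

lemma rao_affine:
  fixes L :: "'a::euclidean_space \<Rightarrow> 'b::euclidean_space"
  assumes "open W" "linear L"
  shows "real_analytic_on (\<lambda>x. L x + k) W"
  unfolding rao_alt
proof
  fix x0 assume x0: "x0 \<in> W"
  obtain r where r: "r > 0" "ball x0 r \<subseteq> W" using assms(1) x0 open_contains_ball by blast
  define c where "c \<alpha> = (if \<alpha> = (\<lambda>_. 0) then L x0 + k else 0) +
      (\<Sum>b\<in>Basis. if \<alpha> = delta_b b then L b else 0)" for \<alpha> :: "'a \<Rightarrow> nat"
  show "\<exists>r>0. ball x0 r \<subseteq> W \<and> (\<exists>c. \<forall>x\<in>ball x0 r.
        ((\<lambda>\<alpha>. mono_b (x - x0) \<alpha> *\<^sub>R c \<alpha>) has_sum L x + k) MI)"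
  proof (intro exI conjI ballI)
    show "r > 0" "ball x0 r \<subseteq> W" using r by auto
    fix x assume "x \<in> ball x0 r"
    define B where "B = insert (\<lambda>_. 0) (delta_b ` (Basis :: 'a set))"
    have c0: "c (\<lambda>_. 0) = L x0 + k"
      unfolding c_def by (simp add: delta_b_ne0' sum.neutral)
    have cd: "c (delta_b b) = L b" if "b \<in> Basis" for b
    proof -
      have "(\<Sum>b'\<in>Basis. if delta_b b = delta_b b' then L b' else 0) = (\<Sum>b'\<in>Basis. if b' = b then L b' else 0)"
        using delta_b_inj by (intro sum.cong refl) (auto simp: inj_eq[OF delta_b_inj])
      then show ?thesis unfolding c_def using that by (simp add: sum.delta delta_b_ne0)
    qed
    show "((\<lambda>\<alpha>. mono_b (x - x0) \<alpha> *\<^sub>R c \<alpha>) has_sum L x + k) MI"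
    proof (rule has_sum_finite_neutralI[where B = B])
      show "finite B" unfolding B_def by simp
      show "B \<subseteq> MI" unfolding B_def MI_def delta_b_def by (auto simp: MI_def B_def delta_b_def)
      show "mono_b (x - x0) \<alpha> *\<^sub>R c \<alpha> = 0" if "\<alpha> \<in> MI - B" for \<alpha>
      proof -
        have a1: "\<alpha> \<noteq> (\<lambda>_. 0)" "\<forall>b\<in>Basis. \<alpha> \<noteq> delta_b b" using that unfolding B_def by auto
        have "(\<Sum>b\<in>Basis. if \<alpha> = delta_b b then L b else 0) = 0"
          using a1(2) by (intro sum.neutral) auto
        then show ?thesis using a1(1) unfolding c_def by simp
      qed
      have "(\<Sum>\<alpha>\<in>B. mono_b (x - x0) \<alpha> *\<^sub>R c \<alpha>) =
          (L x0 + k) + (\<Sum>\<alpha>\<in>delta_b ` Basis. mono_b (x - x0) \<alpha> *\<^sub>R c \<alpha>)"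
        unfolding B_def using c0 by (subst sum.insert) (auto simp: delta_b_ne0')
      also have "(\<Sum>\<alpha>\<in>delta_b ` Basis. mono_b (x - x0) \<alpha> *\<^sub>R c \<alpha>) =
          (\<Sum>b\<in>Basis. ((x - x0) \<bullet> b) *\<^sub>R L b)"
        by (subst sum.reindex) (auto intro!: sum.cong inj_on_subset[OF delta_b_inj] simp: mono_b_delta cd)
      also have "\<dots> = L (\<Sum>b\<in>Basis. ((x - x0) \<bullet> b) *\<^sub>R b)"
        by (simp add: linear_sum[OF assms(2)] o_def linear_scale[OF assms(2)])
      also have "\<dots> = L (x - x0)" by (simp add: euclidean_representation)
      finally show "L x + k = (\<Sum>\<alpha>\<in>B. mono_b (x - x0) \<alpha> *\<^sub>R c \<alpha>)"
        using assms(2) by (simp add: linear_diff)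
    qed
  qed
qed

lemma coord_lipschitz:
  fixes h :: "'a::euclidean_space \<Rightarrow> 'c::euclidean_space" and \<tau> :: "'c \<Rightarrow> 'a"
  assumes Bs: "Bs \<subseteq> Basis" "inj_on \<tau> Bs" "\<tau> ` Bs \<subseteq> Basis"
    and hB1: "\<And>x y b. b \<in> Bs \<Longrightarrow> (h x - h y) \<bullet> b = (x - y) \<bullet> \<tau> b"
    and hB2: "\<And>x y b. b \<in> Basis - Bs \<Longrightarrow> (h x - h y) \<bullet> b = 0"
  shows "dist (h x) (h y) \<le> dist x y"
proof -
  have "(h x - h y) \<bullet> (h x - h y) = (\<Sum>b\<in>Basis. ((h x - h y) \<bullet> b) * ((h x - h y) \<bullet> b))"
    by (rule euclidean_inner)
  also have "\<dots> = (\<Sum>b\<in>Bs. ((h x - h y) \<bullet> b) * ((h x - h y) \<bullet> b))"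
    using Bs hB2 by (intro sum.mono_neutral_right) auto
  also have "\<dots> = (\<Sum>b\<in>Bs. ((x - y) \<bullet> \<tau> b) * ((x - y) \<bullet> \<tau> b))"
    using hB1 by simp
  also have "\<dots> = (\<Sum>b\<in>\<tau> ` Bs. ((x - y) \<bullet> b) * ((x - y) \<bullet> b))"
    using Bs by (simp add: sum.reindex)
  also have "\<dots> \<le> (\<Sum>b\<in>Basis. ((x - y) \<bullet> b) * ((x - y) \<bullet> b))"
    using Bs by (intro sum_mono2) auto
  also have "\<dots> = (x - y) \<bullet> (x - y)" by (rule euclidean_inner[symmetric])
  finally show ?thesis unfolding dist_norm by (simp add: norm_le)
qed

lemma rao_comp:
  fixes h :: "'a::euclidean_space \<Rightarrow> 'c::euclidean_space" and \<tau> :: "'c \<Rightarrow> 'a"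
  assumes G: "real_analytic_on G W"
    and Bs: "Bs \<subseteq> Basis" "inj_on \<tau> Bs" "\<tau> ` Bs \<subseteq> Basis"
    and hB1: "\<And>x y b. b \<in> Bs \<Longrightarrow> (h x - h y) \<bullet> b = (x - y) \<bullet> \<tau> b"
    and hB2: "\<And>x y b. b \<in> Basis - Bs \<Longrightarrow> (h x - h y) \<bullet> b = 0"
  shows "real_analytic_on (\<lambda>x. G (h x)) (h -` W)"
  unfolding rao_alt
proof
  fix x0 assume x0: "x0 \<in> h -` W"
  obtain r c where r: "r > 0" "ball (h x0) r \<subseteq> W"
    "\<forall>y\<in>ball (h x0) r. ((\<lambda>\<alpha>. mono_b (y - h x0) \<alpha> *\<^sub>R c \<alpha>) has_sum G y) MI"
    using G x0 unfolding rao_alt by blast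
  have lip: "dist (h x) (h y) \<le> dist x y" for x y
    by (rule coord_lipschitz[OF Bs hB1 hB2])
  define A1 where "A1 = {\<alpha> :: 'c \<Rightarrow> nat. \<forall>b. b \<notin> Bs \<longrightarrow> \<alpha> b = 0}"
  define A2 where "A2 = {\<beta> :: 'a \<Rightarrow> nat. \<forall>b. b \<notin> \<tau> ` Bs \<longrightarrow> \<beta> b = 0}"
  define R where "R \<beta> = (\<lambda>b. if b \<in> Bs then \<beta> (\<tau> b) else 0)" for \<beta> :: "'a \<Rightarrow> nat"
  define Ri where "Ri \<alpha> = (\<lambda>b'. if b' \<in> \<tau> ` Bs then \<alpha> (inv_into Bs \<tau> b') else 0)" for \<alpha> :: "'c \<Rightarrow> nat"
  define c' where "c' \<beta> = (if \<beta> \<in> A2 then c (R \<beta>) else 0)" for \<beta>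
  show "\<exists>r>0. ball x0 r \<subseteq> h -` W \<and> (\<exists>c. \<forall>x\<in>ball x0 r.
        ((\<lambda>\<alpha>. mono_b (x - x0) \<alpha> *\<^sub>R c \<alpha>) has_sum G (h x)) MI)"
  proof (intro exI conjI ballI)
    show "r > 0" using r by simp
    have hb: "h y \<in> ball (h x0) r" if "y \<in> ball x0 r" for y
    proof -
      have "dist (h y) (h x0) \<le> dist y x0" by (rule lip)
      then show ?thesis using that by (simp add: dist_commute)
    qed
    show "ball x0 r \<subseteq> h -` W"
      using r(2) hb by (auto simp del: mem_ball)
    fix x assume x: "x \<in> ball x0 r"
    then have hx: "h x \<in> ball (h x0) r" by (rule hb)
    let ?f = "\<lambda>\<alpha>. mono_b (h x - h x0) \<alpha> *\<^sub>R c \<alpha>"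
    have s1: "(?f has_sum G (h x)) MI" using r(3) hx by blast
    have s2: "(?f has_sum G (h x)) A1"
    proof (subst has_sum_cong_neutral[where T = MI and g = ?f])
      show "?f \<alpha> = 0" if "\<alpha> \<in> MI - A1" for \<alpha>
      proof -
        from that obtain b where b: "b \<notin> Bs" "\<alpha> b \<noteq> 0" "b \<in> Basis"
          unfolding A1_def MI_def by (auto, metis neq0_conv)
        have "mono_b (h x - h x0) \<alpha> = 0"
          unfolding mono_b_def using b hB2[of b x x0] by (auto simp: prod_zero_iff)
        then show ?thesis by simp
      qed
      show "?f \<alpha> = 0" if "\<alpha> \<in> A1 - MI" for \<alpha>
        using that Bs unfolding A1_def MI_def by auto
    qed (use s1 in auto)
    have s3: "((\<lambda>\<beta>. ?f (R \<beta>)) has_sum G (h x)) A2"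
    proof (subst has_sum_reindex_bij_witness[where i = Ri and j = R and T = A1 and h = ?f])
      show "Ri (R a) = a" if "a \<in> A2" for a
        using that Bs(2) unfolding A2_def Ri_def R_def by (auto simp: fun_eq_iff)
      show "R a \<in> A1" for a unfolding A1_def R_def by auto
      show "R (Ri b) = b" if "b \<in> A1" for b
        using that Bs(2) unfolding A1_def Ri_def R_def by (auto simp: fun_eq_iff)
      show "Ri b \<in> A2" for b unfolding A2_def Ri_def by auto
    qed (use s2 in auto)
    have s4: "((\<lambda>\<beta>. mono_b (x - x0) \<beta> *\<^sub>R c' \<beta>) has_sum G (h x)) A2"
    proof (subst has_sum_cong[where g = "\<lambda>\<beta>. ?f (R \<beta>)"])
      fix \<beta> assume \<beta>: "\<beta> \<in> A2"
      have "mono_b (h x - h x0) (R \<beta>) = (\<Prod>b\<in>Bs. ((h x - h x0) \<bullet> b) ^ R \<beta> b)"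
        unfolding mono_b_def using Bs by (intro prod.mono_neutral_right) (auto simp: R_def)
      also have "\<dots> = (\<Prod>b\<in>Bs. ((x - x0) \<bullet> \<tau> b) ^ \<beta> (\<tau> b))"
        using hB1 by (intro prod.cong) (auto simp: R_def)
      also have "\<dots> = (\<Prod>b\<in>\<tau> ` Bs. ((x - x0) \<bullet> b) ^ \<beta> b)"
        using Bs by (simp add: prod.reindex)
      also have "\<dots> = mono_b (x - x0) \<beta>"
        unfolding mono_b_def using Bs \<beta> by (intro prod.mono_neutral_left) (auto simp: A2_def)
      finally show "mono_b (x - x0) \<beta> *\<^sub>R c' \<beta> = ?f (R \<beta>)" using \<beta> by (simp add: c'_def)
    qed (use s3 in auto)
    show "((\<lambda>\<alpha>. mono_b (x - x0) \<alpha> *\<^sub>R c' \<alpha>) has_sum G (h x)) MI"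
    proof (subst has_sum_cong_neutral[where T = A2 and g = "\<lambda>\<beta>. mono_b (x - x0) \<beta> *\<^sub>R c' \<beta>"])
      show "mono_b (x - x0) \<alpha> *\<^sub>R c' \<alpha> = 0" if "\<alpha> \<in> MI - A2" for \<alpha>
        using that by (simp add: c'_def)
      show "mono_b (x - x0) \<alpha> *\<^sub>R c' \<alpha> = 0" if "\<alpha> \<in> A2 - MI" for \<alpha>
      proof -
        have "A2 \<subseteq> MI" using Bs unfolding A2_def MI_def by blast
        then show ?thesis using that by blast
      qed
    qed (use s4 in auto)
  qed
qed

lemma continuous_on_local:
  fixes f :: "'a::t2_space \<Rightarrow> 'b::topological_space"
  assumes "\<And>x. x \<in> S \<Longrightarrow> \<exists>W. open W \<and> x \<in> W \<and> continuous_on (S \<inter> W) f"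
  shows "continuous_on S f"
proof (subst continuous_on_eq_continuous_within, intro ballI)
  fix x assume x: "x \<in> S"
  then obtain W where W: "open W" "x \<in> W" "continuous_on (S \<inter> W) f" using assms by blast
  then have "continuous (at x within S \<inter> W) f"
    using x by (simp add: continuous_on_eq_continuous_within)
  moreover have "at x within S \<inter> W = at x within S"
    by (rule at_within_nhd[OF W(2) W(1)]) auto
  ultimately show "continuous (at x within S) f" by simp
qed

lemma sum_UNIV_sum:
  fixes f :: "'a::finite + 'b::finite \<Rightarrow> 'c::comm_monoid_add"
  shows "sum f UNIV = (\<Sum>i\<in>UNIV. f (Inl i)) + (\<Sum>j\<in>UNIV. f (Inr j))"
proof -
  have "sum f UNIV = sum f (range Inl) + sum f (range Inr)"
    by (subst UNIV_sum, rule sum.union_disjoint) auto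
  also have "\<dots> = (\<Sum>i\<in>UNIV. f (Inl i)) + (\<Sum>j\<in>UNIV. f (Inr j))"
    by (simp add: sum.reindex)
  finally show ?thesis .
qed

lemma vjoin_nth[simp]: "vjoin x y $ Inl i = x $ i" "vjoin x y $ Inr j = y $ j"
  by (simp_all add: vjoin_def)

lemma vleft_nth[simp]: "vleft z $ i = z $ Inl i" and vright_nth[simp]: "vright z $ j = z $ Inr j"
  by (simp_all add: vleft_def vright_def)

lemma vleft_vjoin[simp]: "vleft (vjoin x y) = x" and vright_vjoin[simp]: "vright (vjoin x y) = y"
  by (simp_all add: vec_eq_iff)

lemma vjoin_split: "vjoin (vleft z) (vright z) = z"
  by (simp add: vec_eq_iff vjoin_def split: sum.split)

lemma vjoin_add: "vjoin (a :: 'p::comm_monoid_add ^'k::finite) 0 + vjoin 0 (b :: 'p^'l::finite) = vjoin a b"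
  by (simp add: vec_eq_iff vjoin_def split: sum.split)

lemma linear_vleft: "linear (vleft :: ('p::real_vector)^('k::finite + 'l::finite) \<Rightarrow> _)"
  by (rule linearI) (simp_all add: vec_eq_iff)

lemma linear_vright: "linear (vright :: ('p::real_vector)^('k::finite + 'l::finite) \<Rightarrow> _)"
  by (rule linearI) (simp_all add: vec_eq_iff)

lemma linear_vjoinL: "linear (\<lambda>a. vjoin a (0 :: ('p::real_vector)^'l::finite) :: 'p^('k::finite + 'l))"
  by (rule linearI) (simp_all add: vec_eq_iff vjoin_def split: sum.split)

lemma linear_vjoinR: "linear (\<lambda>b. vjoin (0 :: ('p::real_vector)^'k::finite) b :: 'p^('k + 'l::finite))"
  by (rule linearI) (simp_all add: vec_eq_iff vjoin_def split: sum.split)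

lemma inner_vleft:
  fixes u :: "('p::real_inner)^('k::finite + 'l::finite)"
  shows "vleft u \<bullet> y = u \<bullet> vjoin y (0 :: 'p^'l)"
  by (simp add: inner_vec_def sum_UNIV_sum)

lemma inner_vright:
  fixes u :: "('p::real_inner)^('k::finite + 'l::finite)"
  shows "vright u \<bullet> y = u \<bullet> vjoin (0 :: 'p^'k) y"
  by (simp add: inner_vec_def sum_UNIV_sum)

lemma vjoin_axis_L: "vjoin (axis i b) (0::'p::real_vector^'l::finite) = (axis (Inl i) b :: 'p^('k::finite+'l))"
  by (simp add: vec_eq_iff axis_def vjoin_def split: sum.split)

lemma vjoin_axis_R: "vjoin (0::'p::real_vector^'k::finite) (axis i b) = (axis (Inr i) b :: 'p^('k+'l::finite))"
  by (simp add: vec_eq_iff axis_def vjoin_def split: sum.split)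

lemma vjoinL_Basis:
  "inj_on (\<lambda>a. vjoin a (0::('p::euclidean_space)^'l::finite) :: 'p^('k::finite + 'l)) Basis"
  "(\<lambda>a. vjoin a (0::('p::euclidean_space)^'l::finite) :: 'p^('k::finite + 'l)) ` Basis \<subseteq> Basis"
proof -
  show "inj_on (\<lambda>a. vjoin a (0::('p::euclidean_space)^'l::finite) :: 'p^('k::finite + 'l)) Basis"
    by (rule inj_onI) (metis vleft_vjoin)
  show "(\<lambda>a. vjoin a (0::('p::euclidean_space)^'l::finite) :: 'p^('k::finite + 'l)) ` Basis \<subseteq> Basis"
    apply (auto simp: Basis_vec_def vjoin_axis_L) by blast
qed

lemma vjoinR_Basis:
  "inj_on (\<lambda>b. vjoin (0::('p::euclidean_space)^'k::finite) b :: 'p^('k + 'l::finite)) Basis"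
  "(\<lambda>b. vjoin (0::('p::euclidean_space)^'k::finite) b :: 'p^('k + 'l::finite)) ` Basis \<subseteq> Basis"
proof -
  show "inj_on (\<lambda>b. vjoin (0::('p::euclidean_space)^'k::finite) b :: 'p^('k + 'l::finite)) Basis"
    by (rule inj_onI) (metis vright_vjoin)
  show "(\<lambda>b. vjoin (0::('p::euclidean_space)^'k::finite) b :: 'p^('k + 'l::finite)) ` Basis \<subseteq> Basis"
    apply (auto simp: Basis_vec_def vjoin_axis_R) by blast
qed

lemma evmap_nth[simp]: "evmap ws \<phi> $ j = \<phi> $ ws j"
  by (simp add: evmap_def)

lemma linear_evmap: "linear (evmap ws :: (real^'n)^'a::finite \<Rightarrow> (real^'n)^'k::finite)"
  by (rule linearI) (simp_all add: vec_eq_iff)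

lemma rao_comp_adj:
  fixes p :: "'a::euclidean_space \<Rightarrow> 'c::euclidean_space"
  assumes G: "real_analytic_on G W" and lp: "linear p"
    and adj: "\<And>u y. p u \<bullet> y = u \<bullet> e y" "inj_on e Basis" "e ` Basis \<subseteq> Basis"
  shows "real_analytic_on (\<lambda>x. G (p x)) (p -` W)"
proof (rule rao_comp[OF G _ adj(2,3)])
  show "(p x - p y) \<bullet> b = (x - y) \<bullet> e b" if "b \<in> Basis" for x y b
    using adj(1) lp by (simp add: linear_diff[symmetric])
qed auto

lemma rao_comp_adj_pair:
  fixes p :: "'a::euclidean_space \<Rightarrow> 'c::euclidean_space" and a :: real
  assumes G: "real_analytic_on G W" and lp: "linear p"
    and adj: "\<And>u y. p u \<bullet> y = u \<bullet> e y" "inj_on e Basis" "e ` Basis \<subseteq> Basis"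
  shows "real_analytic_on (\<lambda>x. G (p (fst x), a)) ((\<lambda>x::'a \<times> real. (p (fst x), a)) -` W)"
proof (rule rao_comp[where Bs = "(\<lambda>b::'c. (b, 0::real)) ` Basis" and \<tau> = "\<lambda>z::'c \<times> real. (e (fst z), 0::real)"])
  show "real_analytic_on G W" by (rule G)
  show "(\<lambda>b::'c. (b, 0::real)) ` Basis \<subseteq> Basis" by (auto simp: Basis_prod_def)
  show "inj_on (\<lambda>z. (e (fst z), 0::real)) ((\<lambda>b::'c. (b, 0::real)) ` Basis)"
    using adj(2) by (auto simp: inj_on_def)
  show "(\<lambda>z. (e (fst z), 0::real)) ` (\<lambda>b::'c. (b, 0::real)) ` Basis \<subseteq> Basis"
    using adj(3) by (auto simp: Basis_prod_def)
  show "((p (fst x), a) - (p (fst y), a)) \<bullet> b = (x - y) \<bullet> (e (fst b), 0)"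
    if "b \<in> (\<lambda>b::'c. (b, 0::real)) ` Basis" for x y :: "'a \<times> real" and b
    using that adj(1) lp by (auto simp: inner_prod_def linear_diff[symmetric])
  show "((p (fst x), a) - (p (fst y), a)) \<bullet> b = 0"
    if "b \<in> Basis - (\<lambda>b::'c. (b, 0::real)) ` Basis" for x y :: "'a \<times> real" and b
    using that by (auto simp: Basis_prod_def inner_prod_def)
qed

lemma analytic_map_on_linear:
  fixes L :: "'a::euclidean_space \<Rightarrow> 'b::euclidean_space"
  assumes "linear L"
  shows "analytic_map_on L S"
  unfolding analytic_map_on_def
proof
  fix x assume "x \<in> S"
  have "real_analytic_on (\<lambda>x. L x + 0) UNIV" by (rule rao_affine[OF open_UNIV assms])
  then show "\<exists>W G. open W \<and> x \<in> W \<and> real_analytic_on G W \<and> (\<forall>y\<in>S \<inter> W. G y = L y)"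
    by (intro exI[of _ UNIV] exI[of _ L]) auto
qed

lemma linear_continuous_on': "linear (L :: 'a::euclidean_space \<Rightarrow> 'b::real_normed_vector) \<Longrightarrow> continuous_on S L"
  by (simp add: linear_continuous_on linear_conv_bounded_linear)

lemma strong_combine:
  fixes ev0 :: "'f0::euclidean_space \<Rightarrow> 'x0::euclidean_space"
    and ev1 :: "'f1::euclidean_space \<Rightarrow> 'x1::euclidean_space"
    and ev :: "'f::euclidean_space \<Rightarrow> 'x::euclidean_space"
    and p0 :: "'x \<Rightarrow> 'x0" and p1 :: "'x \<Rightarrow> 'x1" and e0 :: "'x0 \<Rightarrow> 'x" and e1 :: "'x1 \<Rightarrow> 'x"
    and J0 :: "'f0 \<Rightarrow> 'f" and J1 :: "'f1 \<Rightarrow> 'f" and K0 :: "'f \<Rightarrow> 'f0" and K1 :: "'f \<Rightarrow> 'f1"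
  assumes iso0: "analytic_iso C0 (ev0 ` C0) ev0" and iso1: "analytic_iso C1 (ev1 ` C1) ev1"
    and lin: "linear ev" "linear p0" "linear p1" "linear J0" "linear J1"
    and adj0: "\<And>u y. p0 u \<bullet> y = u \<bullet> e0 y" "inj_on e0 Basis" "e0 ` Basis \<subseteq> Basis"
    and adj1: "\<And>u y. p1 u \<bullet> y = u \<bullet> e1 y" "inj_on e1 Basis" "e1 ` Basis \<subseteq> Basis"
    and K: "\<And>\<phi>. \<phi> \<in> C \<Longrightarrow> K0 \<phi> \<in> C0 \<and> K1 \<phi> \<in> C1 \<and> J0 (K0 \<phi>) + J1 (K1 \<phi>) = \<phi> \<and>
              p0 (ev \<phi>) = ev0 (K0 \<phi>) \<and> p1 (ev \<phi>) = ev1 (K1 \<phi>)"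
  shows "analytic_iso C (ev ` C) ev"
proof -
  obtain g0 where g0: "homeomorphism C0 (ev0 ` C0) ev0 g0" "analytic_map_on g0 (ev0 ` C0)"
    using iso0 unfolding analytic_iso_def by blast
  obtain g1 where g1: "homeomorphism C1 (ev1 ` C1) ev1 g1" "analytic_map_on g1 (ev1 ` C1)"
    using iso1 unfolding analytic_iso_def by blast
  define g where "g u = J0 (g0 (p0 u)) + J1 (g1 (p1 u))" for u
  have gev: "g (ev \<phi>) = \<phi>" if "\<phi> \<in> C" for \<phi>
  proof -
    have "g0 (ev0 (K0 \<phi>)) = K0 \<phi>" "g1 (ev1 (K1 \<phi>)) = K1 \<phi>"
      using K[OF that] g0(1) g1(1) unfolding homeomorphism_def by auto
    then show ?thesis using K[OF that] by (simp add: g_def)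
  qed
  have p0C: "p0 ` ev ` C \<subseteq> ev0 ` C0" and p1C: "p1 ` ev ` C \<subseteq> ev1 ` C1"
    using K by force+
  have hom: "homeomorphism C (ev ` C) ev g"
    unfolding homeomorphism_def
  proof (intro conjI ballI)
    show "g (ev x) = x" if "x \<in> C" for x using gev that by blast
    show "ev ` C = ev ` C" ..
    show "ev (g y) = y" if "y \<in> ev ` C" for y using gev that by auto
    show "g ` ev ` C = C" using gev by force
    show "continuous_on C ev" by (rule linear_continuous_on'[OF lin(1)])
    have c0: "continuous_on (ev ` C) (\<lambda>u. g0 (p0 u))"
      by (rule continuous_on_compose2[OF _ linear_continuous_on'[OF lin(2)] p0C])
         (use g0(1) in \<open>simp add: homeomorphism_def\<close>)
    have c1: "continuous_on (ev ` C) (\<lambda>u. g1 (p1 u))"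
      by (rule continuous_on_compose2[OF _ linear_continuous_on'[OF lin(3)] p1C])
         (use g1(1) in \<open>simp add: homeomorphism_def\<close>)
    show "continuous_on (ev ` C) g"
      unfolding g_def
      by (intro continuous_on_add continuous_on_compose2[OF linear_continuous_on'[OF lin(4)] c0]
          continuous_on_compose2[OF linear_continuous_on'[OF lin(5)] c1]) auto
  qed
  have ang: "analytic_map_on g (ev ` C)"
    unfolding analytic_map_on_def
  proof
    fix u assume u: "u \<in> ev ` C"
    then have "p0 u \<in> ev0 ` C0" "p1 u \<in> ev1 ` C1" using p0C p1C by auto
    then obtain W0 G0 W1 G1 where W0: "open W0" "p0 u \<in> W0" "real_analytic_on G0 W0"
        "\<forall>y\<in>ev0 ` C0 \<inter> W0. G0 y = g0 y"
      and W1: "open W1" "p1 u \<in> W1" "real_analytic_on G1 W1" "\<forall>y\<in>ev1 ` C1 \<inter> W1. G1 y = g1 y"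
      using g0(2) g1(2) unfolding analytic_map_on_def by meson
    have r0: "real_analytic_on (\<lambda>x. G0 (p0 x)) (p0 -` W0)"
      by (rule rao_comp_adj[OF W0(3) lin(2) adj0])
    have r1: "real_analytic_on (\<lambda>x. G1 (p1 x)) (p1 -` W1)"
      by (rule rao_comp_adj[OF W1(3) lin(3) adj1])
    define W where "W = p0 -` W0 \<inter> p1 -` W1"
    have oW: "open W" unfolding W_def using rao_open[OF r0] rao_open[OF r1] by auto
    have "real_analytic_on (\<lambda>x. J0 (G0 (p0 x)) + J1 (G1 (p1 x))) W"
      by (intro rao_add rao_linear[OF _ lin(4)] rao_linear[OF _ lin(5)]
          rao_mono[OF r0 oW] rao_mono[OF r1 oW]) (auto simp: W_def)
    moreover have "\<forall>y\<in>ev ` C \<inter> W. J0 (G0 (p0 y)) + J1 (G1 (p1 y)) = g y"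
    proof
      fix y assume y: "y \<in> ev ` C \<inter> W"
      then have "p0 y \<in> ev0 ` C0 \<inter> W0" "p1 y \<in> ev1 ` C1 \<inter> W1"
        using p0C p1C unfolding W_def by auto
      then show "J0 (G0 (p0 y)) + J1 (G1 (p1 y)) = g y" using W0(4) W1(4) by (simp add: g_def)
    qed
    ultimately show "\<exists>W G. open W \<and> u \<in> W \<and> real_analytic_on G W \<and> (\<forall>y\<in>ev ` C \<inter> W. G y = g y)"
      using oW W0(2) W1(2) unfolding W_def by blast
  qed
  show ?thesis unfolding analytic_iso_def
    using hom ang analytic_map_on_linear[OF lin(1)] by blast
qed

lemma finite_real_code:
  assumes "finite (A :: 'a set)"
  shows "\<exists>enc :: 'a \<Rightarrow> real. inj_on enc A"
proof -
  obtain f n where f: "inj_on (f :: 'a \<Rightarrow> nat) A" using finite_imp_inj_to_nat_seg[OF assms] by blast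
  have "inj_on (\<lambda>x. real (f x)) A" using f by (auto simp: inj_on_def)
  then show ?thesis by blast
qed

lemma functional_combine:
  fixes \<sigma>0 :: "'x0::euclidean_space \<times> real \<Rightarrow> 'f0::euclidean_space"
    and \<sigma>1 :: "'x1::euclidean_space \<times> real \<Rightarrow> 'f1::euclidean_space"
    and ev0 :: "'f0 \<Rightarrow> 'x0" and ev1 :: "'f1 \<Rightarrow> 'x1"
    and ev :: "'f::euclidean_space \<Rightarrow> 'x::euclidean_space"
    and p0 :: "'x \<Rightarrow> 'x0" and p1 :: "'x \<Rightarrow> 'x1" and e0 :: "'x0 \<Rightarrow> 'x" and e1 :: "'x1 \<Rightarrow> 'x"
    and J0 :: "'f0 \<Rightarrow> 'f" and J1 :: "'f1 \<Rightarrow> 'f" and K0 :: "'f \<Rightarrow> 'f0" and K1 :: "'f \<Rightarrow> 'f1"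
  assumes fE0: "finite E0" and iso0: "analytic_iso (U0 \<times> E0) T0 \<sigma>0"
    and ev0\<sigma>: "\<forall>u\<in>U0. \<forall>c\<in>E0. ev0 (\<sigma>0 (u, c)) = u"
    and fE1: "finite E1" and iso1: "analytic_iso (U1 \<times> E1) T1 \<sigma>1"
    and ev1\<sigma>: "\<forall>u\<in>U1. \<forall>c\<in>E1. ev1 (\<sigma>1 (u, c)) = u"
    and lin: "linear ev" "linear p0" "linear p1" "linear J0" "linear J1" "linear K0" "linear K1"
    and adj0: "\<And>u y. p0 u \<bullet> y = u \<bullet> e0 y" "inj_on e0 Basis" "e0 ` Basis \<subseteq> Basis"
    and adj1: "\<And>u y. p1 u \<bullet> y = u \<bullet> e1 y" "inj_on e1 Basis" "e1 ` Basis \<subseteq> Basis"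
    and Ui: "\<And>u. u \<in> U \<Longrightarrow> p0 u \<in> U0 \<and> p1 u \<in> U1"
    and Jok: "\<And>u \<phi>0 \<phi>1. u \<in> U \<Longrightarrow> \<phi>0 \<in> T0 \<Longrightarrow> \<phi>1 \<in> T1 \<Longrightarrow> ev0 \<phi>0 = p0 u \<Longrightarrow> ev1 \<phi>1 = p1 u \<Longrightarrow>
        J0 \<phi>0 + J1 \<phi>1 \<in> T \<and> ev (J0 \<phi>0 + J1 \<phi>1) = u \<and> K0 (J0 \<phi>0 + J1 \<phi>1) = \<phi>0 \<and> K1 (J0 \<phi>0 + J1 \<phi>1) = \<phi>1"
    and Kok: "\<And>\<phi>. \<phi> \<in> T \<Longrightarrow> K0 \<phi> \<in> T0 \<and> K1 \<phi> \<in> T1 \<and> J0 (K0 \<phi>) + J1 (K1 \<phi>) = \<phi> \<and> ev \<phi> \<in> U \<and>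
        p0 (ev \<phi>) = ev0 (K0 \<phi>) \<and> p1 (ev \<phi>) = ev1 (K1 \<phi>)"
  shows "\<exists>(E :: real set) \<sigma>. finite E \<and> analytic_iso (U \<times> E) T \<sigma> \<and> (\<forall>u\<in>U. \<forall>c\<in>E. ev (\<sigma> (u, c)) = u)"
proof -
  obtain g0 where g0: "homeomorphism (U0 \<times> E0) T0 \<sigma>0 g0" "analytic_map_on \<sigma>0 (U0 \<times> E0)"
    using iso0 unfolding analytic_iso_def by blast
  obtain g1 where g1: "homeomorphism (U1 \<times> E1) T1 \<sigma>1 g1" "analytic_map_on \<sigma>1 (U1 \<times> E1)"
    using iso1 unfolding analytic_iso_def by blast
  have g0T: "g0 \<phi> \<in> U0 \<times> E0 \<and> \<sigma>0 (g0 \<phi>) = \<phi>" if "\<phi> \<in> T0" for \<phi>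
    using g0(1) that unfolding homeomorphism_def by blast
  have g1T: "g1 \<phi> \<in> U1 \<times> E1 \<and> \<sigma>1 (g1 \<phi>) = \<phi>" if "\<phi> \<in> T1" for \<phi>
    using g1(1) that unfolding homeomorphism_def by blast
  have g0\<sigma>: "g0 (\<sigma>0 x) = x \<and> \<sigma>0 x \<in> T0" if "x \<in> U0 \<times> E0" for x
    using g0(1) that unfolding homeomorphism_def by blast
  have g1\<sigma>: "g1 (\<sigma>1 x) = x \<and> \<sigma>1 x \<in> T1" if "x \<in> U1 \<times> E1" for x
    using g1(1) that unfolding homeomorphism_def by blast
  have g0ev: "g0 \<phi> = (ev0 \<phi>, snd (g0 \<phi>))" if "\<phi> \<in> T0" for \<phi>
    using g0T[OF that] ev0\<sigma> by (metis mem_Times_iff prod.collapse)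
  have g1ev: "g1 \<phi> = (ev1 \<phi>, snd (g1 \<phi>))" if "\<phi> \<in> T1" for \<phi>
    using g1T[OF that] ev1\<sigma> by (metis mem_Times_iff prod.collapse)
  have cg0: "continuous_on T0 g0" and cg1: "continuous_on T1 g1"
    and cs0: "continuous_on (U0 \<times> E0) \<sigma>0" and cs1: "continuous_on (U1 \<times> E1) \<sigma>1"
    using g0(1) g1(1) unfolding homeomorphism_def by auto
  obtain enc :: "real \<times> real \<Rightarrow> real" where enc: "inj_on enc (E0 \<times> E1)"
    using finite_real_code[of "E0 \<times> E1"] fE0 fE1 by blast
  define E where "E = enc ` (E0 \<times> E1)"
  define dec where "dec = inv_into (E0 \<times> E1) enc"
  have dec_enc: "dec (enc x) = x" if "x \<in> E0 \<times> E1" for x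
    unfolding dec_def using enc that by (rule inv_into_f_f)
  have fE: "finite E" unfolding E_def using fE0 fE1 by simp
  define \<sigma> where "\<sigma> x = J0 (\<sigma>0 (p0 (fst x), fst (dec (snd x)))) + J1 (\<sigma>1 (p1 (fst x), snd (dec (snd x))))"
    for x :: "'x \<times> real"
  define g where "g \<phi> = (ev \<phi>, enc (snd (g0 (K0 \<phi>)), snd (g1 (K1 \<phi>))))" for \<phi>
  have F1: "\<sigma> x \<in> T \<and> g (\<sigma> x) = x \<and> ev (\<sigma> x) = fst x" if xin: "x \<in> U \<times> E" for x
  proof -
    obtain u a0 a1 where x: "x = (u, enc (a0, a1))" "u \<in> U" "a0 \<in> E0" "a1 \<in> E1"
    proof -
      obtain u c where uc: "x = (u, c)" "u \<in> U" "c \<in> E" using xin by (cases x) auto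
      then obtain a0 a1 where "c = enc (a0, a1)" "a0 \<in> E0" "a1 \<in> E1" unfolding E_def by auto
      then show ?thesis using that uc by blast
    qed
    define \<phi>0 where "\<phi>0 = \<sigma>0 (p0 u, a0)"
    define \<phi>1 where "\<phi>1 = \<sigma>1 (p1 u, a1)"
    have u01: "p0 u \<in> U0" "p1 u \<in> U1" using Ui x(2) by auto
    have \<phi>0: "\<phi>0 \<in> T0" "ev0 \<phi>0 = p0 u" "g0 \<phi>0 = (p0 u, a0)"
      using g0\<sigma>[of "(p0 u, a0)"] ev0\<sigma> u01 x(3) unfolding \<phi>0_def by auto
    have \<phi>1: "\<phi>1 \<in> T1" "ev1 \<phi>1 = p1 u" "g1 \<phi>1 = (p1 u, a1)"
      using g1\<sigma>[of "(p1 u, a1)"] ev1\<sigma> u01 x(4) unfolding \<phi>1_def by auto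
    have sx: "\<sigma> x = J0 \<phi>0 + J1 \<phi>1"
      unfolding \<sigma>_def \<phi>0_def \<phi>1_def using x dec_enc by simp
    show ?thesis using Jok[OF x(2) \<phi>0(1) \<phi>1(1) \<phi>0(2) \<phi>1(2)] \<phi>0 \<phi>1 x sx by (simp add: g_def)
  qed
  have F2: "g \<phi> \<in> U \<times> E \<and> \<sigma> (g \<phi>) = \<phi>" if "\<phi> \<in> T" for \<phi>
  proof -
    note K = Kok[OF that]
    have s0: "snd (g0 (K0 \<phi>)) \<in> E0" using g0T K by (metis mem_Times_iff)
    have s1: "snd (g1 (K1 \<phi>)) \<in> E1" using g1T K by (metis mem_Times_iff)
    have "\<sigma> (g \<phi>) = J0 (\<sigma>0 (g0 (K0 \<phi>))) + J1 (\<sigma>1 (g1 (K1 \<phi>)))"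
      unfolding \<sigma>_def g_def using dec_enc s0 s1 K g0ev[of "K0 \<phi>"] g1ev[of "K1 \<phi>"] by simp
    also have "\<dots> = \<phi>" using K g0T g1T by simp
    finally show ?thesis using K s0 s1 unfolding g_def E_def by auto
  qed
  have q0E: "snd (g0 (K0 \<phi>)) \<in> E0" if "\<phi> \<in> T" for \<phi>
    using g0T Kok[OF that] by (metis mem_Times_iff)
  have q1E: "snd (g1 (K1 \<phi>)) \<in> E1" if "\<phi> \<in> T" for \<phi>
    using g1T Kok[OF that] by (metis mem_Times_iff)
  have KT0: "K0 ` T \<subseteq> T0" and KT1: "K1 ` T \<subseteq> T1" using Kok by auto
  have cq0: "continuous_on T (\<lambda>\<psi>. snd (g0 (K0 \<psi>)))"
    by (intro continuous_intros continuous_on_compose2[OF cg0 linear_continuous_on'[OF lin(6)] KT0])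
  have cq1: "continuous_on T (\<lambda>\<psi>. snd (g1 (K1 \<psi>)))"
    by (intro continuous_intros continuous_on_compose2[OF cg1 linear_continuous_on'[OF lin(7)] KT1])
  have LC0: "\<exists>A. open A \<and> \<phi> \<in> A \<and> (\<forall>\<psi>\<in>T \<inter> A. q \<psi> = q \<phi>)"
    if H: "\<phi> \<in> T" "continuous_on T q" "\<And>\<psi>. \<psi> \<in> T \<Longrightarrow> q \<psi> \<in> EE" "finite EE"
    for \<phi> and q :: "'f \<Rightarrow> real" and EE
  proof -
    obtain \<delta> where \<delta>: "\<delta> > 0" "\<forall>y\<in>EE. y \<noteq> q \<phi> \<longrightarrow> \<delta> \<le> dist (q \<phi>) y"
      using finite_set_avoid[OF H(4)] by blast
    obtain A where A: "open A" "A \<inter> T = q -` ball (q \<phi>) \<delta> \<inter> T"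
      using H(2) unfolding continuous_on_open_invariant by (meson open_ball)
    have "\<phi> \<in> A" using A(2) H(1) \<delta>(1) by auto
    moreover have "q \<psi> = q \<phi>" if "\<psi> \<in> T \<inter> A" for \<psi>
    proof -
      have "dist (q \<phi>) (q \<psi>) < \<delta>" using A(2) that by auto
      then show ?thesis using \<delta>(2) that H(3)[of \<psi>] by force
    qed
    ultimately show ?thesis using A(1) by blast
  qed
  have LC: "\<exists>W. open W \<and> \<phi> \<in> W \<and> (\<forall>\<psi>\<in>T \<inter> W. g \<psi> = (ev \<psi>, enc (snd (g0 (K0 \<phi>)), snd (g1 (K1 \<phi>)))))"
    if Hp: "\<phi> \<in> T" for \<phi>
  proof -
    obtain A0 where A0: "open A0" "\<phi> \<in> A0" "\<forall>\<psi>\<in>T \<inter> A0. snd (g0 (K0 \<psi>)) = snd (g0 (K0 \<phi>))"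
      using LC0[OF Hp cq0 q0E fE0] by blast
    obtain A1 where A1: "open A1" "\<phi> \<in> A1" "\<forall>\<psi>\<in>T \<inter> A1. snd (g1 (K1 \<psi>)) = snd (g1 (K1 \<phi>))"
      using LC0[OF Hp cq1 q1E fE1] by blast
    show ?thesis
      by (rule exI[of _ "A0 \<inter> A1"]) (use A0 A1 in \<open>auto simp: g_def\<close>)
  qed
  have linP: "linear (\<lambda>\<psi>. (ev \<psi>, 0::real))"
    using lin(1) by (intro linearI) (auto simp: linear_add linear_scale)
  have hom: "homeomorphism (U \<times> E) T \<sigma> g"
    unfolding homeomorphism_def
  proof (intro conjI ballI)
    show "g (\<sigma> x) = x" if "x \<in> U \<times> E" for x using F1 that by blast
    show "\<sigma> ` (U \<times> E) = T" using F1 F2 by force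
    show "\<sigma> (g y) = y" if "y \<in> T" for y using F2 that by blast
    show "g ` T = U \<times> E" using F1 F2 by force
    show "continuous_on (U \<times> E) \<sigma>"
    proof (rule continuous_on_local)
      fix x assume x: "x \<in> U \<times> E"
      obtain \<delta> where \<delta>: "\<delta> > 0" "\<forall>y\<in>E. y \<noteq> snd x \<longrightarrow> \<delta> \<le> dist (snd x) y"
        using finite_set_avoid[OF fE] by blast
      define a0 where "a0 = fst (dec (snd x))"
      define a1 where "a1 = snd (dec (snd x))"
      have a01: "a0 \<in> E0" "a1 \<in> E1" using x dec_enc unfolding a0_def a1_def E_def by auto
      define W :: "('x \<times> real) set" where "W = UNIV \<times> ball (snd x) \<delta>"
      have snd_eq: "snd y = snd x" if "y \<in> (U \<times> E) \<inter> W" for y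
        using that \<delta> x unfolding W_def by (force simp: dist_commute)
      have cp0: "continuous_on S (\<lambda>y. p0 (fst y))" for S :: "('x \<times> real) set"
        by (rule continuous_on_compose2[OF linear_continuous_on'[OF lin(2)]]) (auto intro: continuous_intros)
      have cp1: "continuous_on S (\<lambda>y. p1 (fst y))" for S :: "('x \<times> real) set"
        by (rule continuous_on_compose2[OF linear_continuous_on'[OF lin(3)]]) (auto intro: continuous_intros)
      have c0: "continuous_on ((U \<times> E) \<inter> W) (\<lambda>y. \<sigma>0 (p0 (fst y), a0))"
        by (rule continuous_on_compose2[OF cs0])
           (use a01 Ui in \<open>auto intro!: continuous_intros cp0\<close>)
      have c1: "continuous_on ((U \<times> E) \<inter> W) (\<lambda>y. \<sigma>1 (p1 (fst y), a1))"
        by (rule continuous_on_compose2[OF cs1])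
           (use a01 Ui in \<open>auto intro!: continuous_intros cp1\<close>)
      have "continuous_on ((U \<times> E) \<inter> W) (\<lambda>y. J0 (\<sigma>0 (p0 (fst y), a0)) + J1 (\<sigma>1 (p1 (fst y), a1)))"
        by (intro continuous_on_add continuous_on_compose2[OF linear_continuous_on'[OF lin(4)] c0]
          continuous_on_compose2[OF linear_continuous_on'[OF lin(5)] c1]) auto
      then have "continuous_on ((U \<times> E) \<inter> W) \<sigma>"
        by (rule continuous_on_cong[THEN iffD1, rotated 2])
           (auto simp: \<sigma>_def a0_def a1_def snd_eq)
      moreover have "open W" "x \<in> W" unfolding W_def using \<delta> by (auto simp: open_Times mem_Times_iff)
      ultimately show "\<exists>W. open W \<and> x \<in> W \<and> continuous_on ((U \<times> E) \<inter> W) \<sigma>" by blast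
    qed
    show "continuous_on T g"
    proof (rule continuous_on_local)
      fix \<phi> assume \<phi>: "\<phi> \<in> T"
      then obtain W where W: "open W" "\<phi> \<in> W"
        "\<forall>\<psi>\<in>T \<inter> W. g \<psi> = (ev \<psi>, enc (snd (g0 (K0 \<phi>)), snd (g1 (K1 \<phi>))))"
        using LC by blast
      have "continuous_on (T \<inter> W) (\<lambda>\<psi>. (ev \<psi>, enc (snd (g0 (K0 \<phi>)), snd (g1 (K1 \<phi>)))))"
        by (intro continuous_intros linear_continuous_on'[OF lin(1)])
      then have "continuous_on (T \<inter> W) g"
        by (rule continuous_on_cong[THEN iffD1, rotated 2]) (use W(3) in auto)
      then show "\<exists>W. open W \<and> \<phi> \<in> W \<and> continuous_on (T \<inter> W) g" using W by blast
    qed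
  qed
  have ang: "analytic_map_on g T"
    unfolding analytic_map_on_def
  proof
    fix \<phi> assume \<phi>: "\<phi> \<in> T"
    then obtain W where W: "open W" "\<phi> \<in> W"
      "\<forall>\<psi>\<in>T \<inter> W. g \<psi> = (ev \<psi>, enc (snd (g0 (K0 \<phi>)), snd (g1 (K1 \<phi>))))"
      using LC by blast
    define k where "k = ((0::'x), enc (snd (g0 (K0 \<phi>)), snd (g1 (K1 \<phi>))))"
    have "real_analytic_on (\<lambda>\<psi>. (ev \<psi>, 0::real) + k) W"
      by (rule rao_affine[OF W(1) linP])
    moreover have "\<forall>\<psi>\<in>T \<inter> W. (ev \<psi>, 0::real) + k = g \<psi>" using W(3) by (simp add: k_def)
    ultimately show "\<exists>W G. open W \<and> \<phi> \<in> W \<and> real_analytic_on G W \<and> (\<forall>y\<in>T \<inter> W. G y = g y)"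
      using W(1,2) by blast
  qed
  have ans: "analytic_map_on \<sigma> (U \<times> E)"
    unfolding analytic_map_on_def
  proof
    fix x assume x: "x \<in> U \<times> E"
    obtain \<delta> where \<delta>: "\<delta> > 0" "\<forall>y\<in>E. y \<noteq> snd x \<longrightarrow> \<delta> \<le> dist (snd x) y"
      using finite_set_avoid[OF fE] by blast
    define a0 where "a0 = fst (dec (snd x))"
    define a1 where "a1 = snd (dec (snd x))"
    have a01: "a0 \<in> E0" "a1 \<in> E1" using x dec_enc unfolding a0_def a1_def E_def by auto
    have u01: "p0 (fst x) \<in> U0" "p1 (fst x) \<in> U1" using Ui x by auto
    obtain W0 G0 where W0: "open W0" "(p0 (fst x), a0) \<in> W0" "real_analytic_on G0 W0"
        "\<forall>y\<in>(U0 \<times> E0) \<inter> W0. G0 y = \<sigma>0 y"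
    proof -
      have "(p0 (fst x), a0) \<in> U0 \<times> E0" using a01 u01 by simp
      then show ?thesis using that g0(2) unfolding analytic_map_on_def by blast
    qed
    obtain W1 G1 where W1: "open W1" "(p1 (fst x), a1) \<in> W1" "real_analytic_on G1 W1"
        "\<forall>y\<in>(U1 \<times> E1) \<inter> W1. G1 y = \<sigma>1 y"
    proof -
      have "(p1 (fst x), a1) \<in> U1 \<times> E1" using a01 u01 by simp
      then show ?thesis using that g1(2) unfolding analytic_map_on_def by blast
    qed
    have r0: "real_analytic_on (\<lambda>y. G0 (p0 (fst y), a0)) ((\<lambda>y::'x \<times> real. (p0 (fst y), a0)) -` W0)"
      by (rule rao_comp_adj_pair[OF W0(3) lin(2) adj0])
    have r1: "real_analytic_on (\<lambda>y. G1 (p1 (fst y), a1)) ((\<lambda>y::'x \<times> real. (p1 (fst y), a1)) -` W1)"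
      by (rule rao_comp_adj_pair[OF W1(3) lin(3) adj1])
    define W where "W = ((\<lambda>y::'x \<times> real. (p0 (fst y), a0)) -` W0) \<inter>
      ((\<lambda>y::'x \<times> real. (p1 (fst y), a1)) -` W1) \<inter> (UNIV \<times> ball (snd x) \<delta>)"
    have oW: "open W" unfolding W_def using rao_open[OF r0] rao_open[OF r1]
      by (intro open_Int open_Times) auto
    have xW: "x \<in> W" unfolding W_def using W0(2) W1(2) \<delta>(1) by (auto simp: mem_Times_iff)
    have "real_analytic_on (\<lambda>y. J0 (G0 (p0 (fst y), a0)) + J1 (G1 (p1 (fst y), a1))) W"
      by (intro rao_add rao_linear[OF _ lin(4)] rao_linear[OF _ lin(5)]
          rao_mono[OF r0 oW] rao_mono[OF r1 oW]) (auto simp: W_def)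
    moreover have "\<forall>y\<in>(U \<times> E) \<inter> W. J0 (G0 (p0 (fst y), a0)) + J1 (G1 (p1 (fst y), a1)) = \<sigma> y"
    proof
      fix y assume y: "y \<in> (U \<times> E) \<inter> W"
      have sy: "snd y = snd x"
        using y \<delta> unfolding W_def by (force simp: dist_commute mem_Times_iff)
      have "(p0 (fst y), a0) \<in> (U0 \<times> E0) \<inter> W0" "(p1 (fst y), a1) \<in> (U1 \<times> E1) \<inter> W1"
        using y Ui a01 unfolding W_def by (auto simp: mem_Times_iff)
      then show "J0 (G0 (p0 (fst y), a0)) + J1 (G1 (p1 (fst y), a1)) = \<sigma> y"
        using W0(4) W1(4) sy by (simp add: \<sigma>_def a0_def a1_def)
    qed
    ultimately show "\<exists>W G. open W \<and> x \<in> W \<and> real_analytic_on G W \<and> (\<forall>y\<in>(U \<times> E) \<inter> W. G y = \<sigma> y)"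
      using oW xW by blast
  qed
  have "analytic_iso (U \<times> E) T \<sigma>" unfolding analytic_iso_def using hom ang ans by blast
  moreover have "\<forall>u\<in>U. \<forall>c\<in>E. ev (\<sigma> (u, c)) = u" using F1 by force
  ultimately show ?thesis using fE by blast
qed

lemma diff_Inl_Inr: "(Inl ` A \<union> Inr ` B) - (Inl ` C \<union> Inr ` D) = Inl ` (A - C) \<union> Inr ` (B - D)"
  by auto

lemma sum_img_mem[simp]: "Inl v \<in> Inl ` A \<longleftrightarrow> v \<in> A" "Inl v \<notin> Inr ` B"
  "Inr w \<in> Inr ` B \<longleftrightarrow> w \<in> B" "Inr w \<notin> Inl ` A"
  by auto

lemma conf_disj_vjoin:
  fixes L0 :: "('v::finite, 'e0, real^'n) linkage" and L1 :: "('w::finite, 'e1, real^'n) linkage"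
  shows "vjoin a b \<in> conf (disj_union L0 L1) \<longleftrightarrow> a \<in> conf L0 \<and> b \<in> conf L1"
  unfolding conf_def disj_union_def
  by (simp add: diff_Inl_Inr ball_Un split_sum_all split_beta map_prod_def) blast

lemma conf_disj:
  fixes L0 :: "('v::finite, 'e0, real^'n) linkage" and L1 :: "('w::finite, 'e1, real^'n) linkage"
  shows "\<phi> \<in> conf (disj_union L0 L1) \<longleftrightarrow> vleft \<phi> \<in> conf L0 \<and> vright \<phi> \<in> conf L1"
  using conf_disj_vjoin[of "vleft \<phi>" "vright \<phi>" L0 L1] by (simp add: vjoin_split)

lemma evmap_case:
  "evmap (case_sum (Inl \<circ> ws0) (Inr \<circ> ws1)) \<phi> = vjoin (evmap ws0 (vleft \<phi>)) (evmap ws1 (vright \<phi>))"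
  by (simp add: vec_eq_iff vjoin_def split: sum.split)

lemma part1_quasi:
  fixes L0 :: "('v::finite, 'e0, real^'n) linkage" and L1 :: "('w::finite, 'e1, real^'n) linkage"
    and ws0 :: "'k0::finite \<Rightarrow> 'v" and vs0 :: "'m0::finite \<Rightarrow> 'v"
    and ws1 :: "'k1::finite \<Rightarrow> 'w" and vs1 :: "'m1::finite \<Rightarrow> 'w"
  assumes Q0: "quasifunctional L0 ws0 vs0 f0" and Q1: "quasifunctional L1 ws1 vs1 f1"
  shows "quasifunctional (disj_union L0 L1)
           (case_sum (Inl \<circ> ws0) (Inr \<circ> ws1)) (case_sum (Inl \<circ> vs0) (Inr \<circ> vs1))
           (\<lambda>x. vjoin (f0 (vleft x)) (f1 (vright x)))"
  unfolding quasifunctional_def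
proof (intro conjI ballI)
  show "range (case_sum (Inl \<circ> ws0) (Inr \<circ> ws1)) \<subseteq> verts (disj_union L0 L1)"
    using Q0 Q1 unfolding quasifunctional_def disj_union_def image_subset_iff by (auto split: sum.split)
  show "range (case_sum (Inl \<circ> vs0) (Inr \<circ> vs1)) \<subseteq> verts (disj_union L0 L1)"
    using Q0 Q1 unfolding quasifunctional_def disj_union_def image_subset_iff by (auto split: sum.split)
  fix \<phi> assume "\<phi> \<in> conf (disj_union L0 L1)"
  then have "vleft \<phi> \<in> conf L0" "vright \<phi> \<in> conf L1" by (auto simp: conf_disj)
  then show "evmap (case_sum (Inl \<circ> vs0) (Inr \<circ> vs1)) \<phi> =
      vjoin (f0 (vleft (evmap (case_sum (Inl \<circ> ws0) (Inr \<circ> ws1)) \<phi>)))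
            (f1 (vright (evmap (case_sum (Inl \<circ> ws0) (Inr \<circ> ws1)) \<phi>)))"
    using Q0 Q1 unfolding quasifunctional_def by (simp add: evmap_case)
qed

lemma part1_Usub:
  fixes L0 :: "('v::finite, 'e0, real^'n) linkage" and L1 :: "('w::finite, 'e1, real^'n) linkage"
    and ws0 :: "'k0::finite \<Rightarrow> 'v" and ws1 :: "'k1::finite \<Rightarrow> 'w"
  assumes "U0 \<subseteq> evmap ws0 ` conf L0" "U1 \<subseteq> evmap ws1 ` conf L1"
  shows "(\<lambda>(a, b). vjoin a b) ` (U0 \<times> U1) \<subseteq> evmap (case_sum (Inl \<circ> ws0) (Inr \<circ> ws1)) ` conf (disj_union L0 L1)"
proof
  fix x assume "x \<in> (\<lambda>(a, b). vjoin a b) ` (U0 \<times> U1)"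
  then obtain a b where ab: "x = vjoin a b" "a \<in> U0" "b \<in> U1" by auto
  obtain \<phi>0 \<phi>1 where "\<phi>0 \<in> conf L0" "a = evmap ws0 \<phi>0" "\<phi>1 \<in> conf L1" "b = evmap ws1 \<phi>1"
    using assms ab by blast
  then show "x \<in> evmap (case_sum (Inl \<circ> ws0) (Inr \<circ> ws1)) ` conf (disj_union L0 L1)"
    using ab by (intro image_eqI[of _ _ "vjoin \<phi>0 \<phi>1"]) (auto simp: evmap_case conf_disj_vjoin)
qed

lemma functional_rdE:
  assumes "functional_rd L ws vs f U"
  obtains E :: "real set" and \<sigma> where "quasifunctional L ws vs f" "U \<subseteq> evmap ws ` conf L" "finite E"
    "analytic_iso (U \<times> E) {\<phi>\<in>conf L. evmap ws \<phi> \<in> U} \<sigma>" "\<forall>u\<in>U. \<forall>c\<in>E. evmap ws (\<sigma> (u, c)) = u"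
  using assms unfolding functional_rd_def by blast

lemma part1_func:
  fixes L0 :: "('v::finite, 'e0, real^'n) linkage" and L1 :: "('w::finite, 'e1, real^'n) linkage"
    and ws0 :: "'k0::finite \<Rightarrow> 'v" and vs0 :: "'m0::finite \<Rightarrow> 'v"
    and ws1 :: "'k1::finite \<Rightarrow> 'w" and vs1 :: "'m1::finite \<Rightarrow> 'w"
  assumes F0: "functional_rd L0 ws0 vs0 f0 U0" and F1: "functional_rd L1 ws1 vs1 f1 U1"
  shows "functional_rd (disj_union L0 L1)
           (case_sum (Inl \<circ> ws0) (Inr \<circ> ws1)) (case_sum (Inl \<circ> vs0) (Inr \<circ> vs1))
           (\<lambda>x. vjoin (f0 (vleft x)) (f1 (vright x)))
           ((\<lambda>(a, b). vjoin a b) ` (U0 \<times> U1))"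
proof -
  let ?D = "disj_union L0 L1"
  let ?ws = "case_sum (Inl \<circ> ws0) (Inr \<circ> ws1)"
  let ?U = "(\<lambda>(a, b). vjoin a b) ` (U0 \<times> U1)"
  obtain E0 :: "real set" and \<sigma>0 where S0: "finite E0" "analytic_iso (U0 \<times> E0) {\<phi>\<in>conf L0. evmap ws0 \<phi> \<in> U0} \<sigma>0"
      "\<forall>u\<in>U0. \<forall>c\<in>E0. evmap ws0 (\<sigma>0 (u, c)) = u"
    using F0 unfolding functional_rd_def by blast
  obtain E1 :: "real set" and \<sigma>1 where S1: "finite E1" "analytic_iso (U1 \<times> E1) {\<phi>\<in>conf L1. evmap ws1 \<phi> \<in> U1} \<sigma>1"
      "\<forall>u\<in>U1. \<forall>c\<in>E1. evmap ws1 (\<sigma>1 (u, c)) = u"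
    using F1 unfolding functional_rd_def by blast
  have Ui: "\<And>u. u \<in> ?U \<Longrightarrow> vleft u \<in> U0 \<and> vright u \<in> U1" by auto
  have Jok: "\<And>u \<phi>0 \<phi>1. u \<in> ?U \<Longrightarrow> \<phi>0 \<in> {\<phi>\<in>conf L0. evmap ws0 \<phi> \<in> U0} \<Longrightarrow>
      \<phi>1 \<in> {\<phi>\<in>conf L1. evmap ws1 \<phi> \<in> U1} \<Longrightarrow>
      evmap ws0 \<phi>0 = vleft u \<Longrightarrow> evmap ws1 \<phi>1 = vright u \<Longrightarrow>
      vjoin \<phi>0 0 + vjoin 0 \<phi>1 \<in> {\<phi>\<in>conf ?D. evmap ?ws \<phi> \<in> ?U} \<and>
      evmap ?ws (vjoin \<phi>0 0 + vjoin 0 \<phi>1) = u \<and>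
      vleft (vjoin \<phi>0 0 + vjoin 0 \<phi>1) = \<phi>0 \<and> vright (vjoin \<phi>0 0 + vjoin 0 \<phi>1) = \<phi>1"
    by (auto simp: vjoin_add conf_disj_vjoin evmap_case)
  have Kok: "\<And>\<phi>. \<phi> \<in> {\<phi>\<in>conf ?D. evmap ?ws \<phi> \<in> ?U} \<Longrightarrow>
      vleft \<phi> \<in> {\<phi>\<in>conf L0. evmap ws0 \<phi> \<in> U0} \<and> vright \<phi> \<in> {\<phi>\<in>conf L1. evmap ws1 \<phi> \<in> U1} \<and>
      vjoin (vleft \<phi>) 0 + vjoin 0 (vright \<phi>) = \<phi> \<and> evmap ?ws \<phi> \<in> ?U \<and>
      vleft (evmap ?ws \<phi>) = evmap ws0 (vleft \<phi>) \<and> vright (evmap ?ws \<phi>) = evmap ws1 (vright \<phi>)"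
  proof -
    fix \<phi> assume \<phi>: "\<phi> \<in> {\<phi>\<in>conf ?D. evmap ?ws \<phi> \<in> ?U}"
    then obtain a b where ab: "evmap ?ws \<phi> = vjoin a b" "a \<in> U0" "b \<in> U1" by auto
    have e: "evmap ws0 (vleft \<phi>) = a" "evmap ws1 (vright \<phi>) = b"
      using ab(1) unfolding evmap_case by (metis vleft_vjoin, metis vright_vjoin)
    show "?thesis \<phi>" using \<phi> ab e by (auto simp: conf_disj vjoin_add vjoin_split evmap_case)
  qed
  have "\<exists>(E :: real set) \<sigma>. finite E \<and> analytic_iso (?U \<times> E) {\<phi>\<in>conf ?D. evmap ?ws \<phi> \<in> ?U} \<sigma> \<and>
      (\<forall>u\<in>?U. \<forall>c\<in>E. evmap ?ws (\<sigma> (u, c)) = u)"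
    by (rule functional_combine[OF S0 S1 linear_evmap linear_vleft linear_vright linear_vjoinL linear_vjoinR
        linear_vleft linear_vright inner_vleft vjoinL_Basis inner_vright vjoinR_Basis Ui Jok Kok])
  moreover have "quasifunctional ?D ?ws (case_sum (Inl \<circ> vs0) (Inr \<circ> vs1))
           (\<lambda>x. vjoin (f0 (vleft x)) (f1 (vright x)))"
    using F0 F1 unfolding functional_rd_def by (intro part1_quasi) simp_all
  moreover have "?U \<subseteq> evmap ?ws ` conf ?D"
    using F0 F1 unfolding functional_rd_def by (intro part1_Usub) simp_all
  ultimately show ?thesis unfolding functional_rd_def by blast
qed

lemma part1_strong:
  fixes L0 :: "('v::finite, 'e0, real^'n) linkage" and L1 :: "('w::finite, 'e1, real^'n) linkage"
    and ws0 :: "'k0::finite \<Rightarrow> 'v" and vs0 :: "'m0::finite \<Rightarrow> 'v"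
    and ws1 :: "'k1::finite \<Rightarrow> 'w" and vs1 :: "'m1::finite \<Rightarrow> 'w"
  assumes F0: "strongly_functional_rd L0 ws0 vs0 f0 U0" and F1: "strongly_functional_rd L1 ws1 vs1 f1 U1"
  shows "strongly_functional_rd (disj_union L0 L1)
           (case_sum (Inl \<circ> ws0) (Inr \<circ> ws1)) (case_sum (Inl \<circ> vs0) (Inr \<circ> vs1))
           (\<lambda>x. vjoin (f0 (vleft x)) (f1 (vright x)))
           ((\<lambda>(a, b). vjoin a b) ` (U0 \<times> U1))"
proof -
  let ?D = "disj_union L0 L1"
  let ?ws = "case_sum (Inl \<circ> ws0) (Inr \<circ> ws1)"
  let ?U = "(\<lambda>(a, b). vjoin a b) ` (U0 \<times> U1)"
  have I0: "analytic_iso (conf L0) (evmap ws0 ` conf L0) (evmap ws0)"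
    using F0 unfolding strongly_functional_rd_def by simp
  have I1: "analytic_iso (conf L1) (evmap ws1 ` conf L1) (evmap ws1)"
    using F1 unfolding strongly_functional_rd_def by simp
  have K: "\<And>\<phi>. \<phi> \<in> conf ?D \<Longrightarrow> vleft \<phi> \<in> conf L0 \<and> vright \<phi> \<in> conf L1 \<and>
      vjoin (vleft \<phi>) 0 + vjoin 0 (vright \<phi>) = \<phi> \<and>
      vleft (evmap ?ws \<phi>) = evmap ws0 (vleft \<phi>) \<and> vright (evmap ?ws \<phi>) = evmap ws1 (vright \<phi>)"
    by (auto simp: conf_disj vjoin_add vjoin_split evmap_case)
  have "analytic_iso (conf ?D) (evmap ?ws ` conf ?D) (evmap ?ws)"
    by (rule strong_combine[OF I0 I1 linear_evmap linear_vleft linear_vright linear_vjoinL linear_vjoinR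
        inner_vleft vjoinL_Basis inner_vright vjoinR_Basis K])
  moreover have "quasifunctional ?D ?ws (case_sum (Inl \<circ> vs0) (Inr \<circ> vs1))
           (\<lambda>x. vjoin (f0 (vleft x)) (f1 (vright x)))"
    using F0 F1 unfolding strongly_functional_rd_def by (intro part1_quasi) simp_all
  moreover have "?U \<subseteq> evmap ?ws ` conf ?D"
    using F0 F1 unfolding strongly_functional_rd_def by (intro part1_Usub) simp_all
  ultimately show ?thesis unfolding strongly_functional_rd_def by blast
qed

definition Pm :: "('a \<Rightarrow> 'c::finite) \<Rightarrow> 'a set \<Rightarrow> ('p::zero)^'a \<Rightarrow> 'p^'c" where
  "Pm \<pi> V z = (\<chi> c. if c \<in> \<pi> ` V then z $ (SOME x. x \<in> V \<and> \<pi> x = c) else 0)"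

definition Qm :: "('a::finite \<Rightarrow> 'c) \<Rightarrow> 'a set \<Rightarrow> ('p::zero)^'c \<Rightarrow> 'p^'a" where
  "Qm \<pi> V \<phi> = (\<chi> x. if x \<in> V then \<phi> $ \<pi> x else 0)"

lemma linear_Pm: "linear (Pm \<pi> V :: ('p::real_vector)^'a \<Rightarrow> 'p^'c::finite)"
  by (rule linearI) (simp_all add: vec_eq_iff Pm_def)

lemma linear_Qm: "linear (Qm \<pi> V :: ('p::real_vector)^'c \<Rightarrow> 'p^'a::finite)"
  by (rule linearI) (simp_all add: vec_eq_iff Qm_def)

lemma linear_ident': "linear (\<lambda>x::'a::real_vector. x)"
  by (rule linearI) simp_all

lemma Qm_nth: "x \<in> V \<Longrightarrow> Qm \<pi> V \<phi> $ x = \<phi> $ \<pi> x"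
  by (simp add: Qm_def)

lemma push_simps[simp]:
  "verts (push_linkage \<pi> L) = \<pi> ` verts L" "edges (push_linkage \<pi> L) = edges L"
  "ends (push_linkage \<pi> L) e = map_prod \<pi> \<pi> (ends L e)" "len (push_linkage \<pi> L) = len L"
  "flex (push_linkage \<pi> L) = flex L" "pins (push_linkage \<pi> L) = map_prod \<pi> id ` pins L"
  by (simp_all add: push_linkage_def)

lemma conf_flexD: "\<phi> \<in> conf L \<Longrightarrow> e \<in> flex L \<Longrightarrow> dist (\<phi> $ fst (ends L e)) (\<phi> $ snd (ends L e)) \<le> len L e"
  by (simp add: conf_def)

lemma conf_rigidD: "\<phi> \<in> conf L \<Longrightarrow> e \<in> edges L \<Longrightarrow> e \<notin> flex L \<Longrightarrow> dist (\<phi> $ fst (ends L e)) (\<phi> $ snd (ends L e)) = len L e"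
  by (simp add: conf_def)

lemma conf_pinD: "\<phi> \<in> conf L \<Longrightarrow> (v, x) \<in> pins L \<Longrightarrow> \<phi> $ v = x"
  by (auto simp: conf_def)

lemma conf_zeroD: "\<phi> \<in> conf L \<Longrightarrow> v \<notin> verts L \<Longrightarrow> \<phi> $ v = 0"
  by (simp add: conf_def)

context
  fixes L0 :: "('v::finite, 'e0, real^'n) linkage" and L1 :: "('w::finite, 'e1, real^'n) linkage"
    and ws0 :: "'k::finite \<Rightarrow> 'v" and ws1 :: "'k \<Rightarrow> 'w" and \<pi> :: "'v + 'w \<Rightarrow> 'c::finite"
  assumes cab0: "cabled_linkage L0" and cab1: "cabled_linkage L1"
    and rw0: "range ws0 \<subseteq> verts L0" and rw1: "range ws1 \<subseteq> verts L1"
    and ident: "is_identification \<pi> (verts (disj_union L0 L1)) {(Inl (ws0 j), Inr (ws1 j)) | j. True}"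
begin

abbreviation "VD \<equiv> verts (disj_union L0 L1)"
abbreviation "cons z \<equiv> evmap ws0 (vleft z) = evmap ws1 (vright z)"

lemma VD_Inl: "Inl (ws0 j) \<in> VD" and VD_Inr: "Inr (ws1 j) \<in> VD"
  using rw0 rw1 by (auto simp: disj_union_def)

lemma pins_VD: "(x, p) \<in> pins (disj_union L0 L1) \<Longrightarrow> x \<in> VD"
proof -
  assume "(x, p) \<in> pins (disj_union L0 L1)"
  then have "(x, p) \<in> map_prod Inl id ` pins L0 \<union> map_prod Inr id ` pins L1"
    by (simp add: disj_union_def)
  moreover have "fst ` pins L0 \<subseteq> verts L0" "fst ` pins L1 \<subseteq> verts L1"
    using cab0 cab1 unfolding cabled_linkage_def by simp_all
  ultimately show ?thesis by (auto simp: disj_union_def map_prod_def split_beta image_iff)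
qed

lemma ends_VD: "e \<in> edges (disj_union L0 L1) \<Longrightarrow>
    fst (ends (disj_union L0 L1) e) \<in> VD \<and> snd (ends (disj_union L0 L1) e) \<in> VD"
proof -
  assume "e \<in> edges (disj_union L0 L1)"
  then have "e \<in> Inl ` edges L0 \<union> Inr ` edges L1" by (simp add: disj_union_def)
  moreover have "\<forall>e\<in>edges L0. fst (ends L0 e) \<in> verts L0 \<and> snd (ends L0 e) \<in> verts L0"
    "\<forall>e\<in>edges L1. fst (ends L1 e) \<in> verts L1 \<and> snd (ends L1 e) \<in> verts L1"
    using cab0 cab1 unfolding cabled_linkage_def by simp_all
  ultimately show ?thesis by (auto simp: disj_union_def map_prod_def split_beta)
qed

lemma flex_edges: "flex (disj_union L0 L1) \<subseteq> edges (disj_union L0 L1)"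
proof -
  have "flex L0 \<subseteq> edges L0" "flex L1 \<subseteq> edges L1"
    using cab0 cab1 unfolding cabled_linkage_def by simp_all
  then show ?thesis by (auto simp: disj_union_def)
qed

lemma pi_glue: "\<pi> (Inl (ws0 j)) = \<pi> (Inr (ws1 j))"
proof -
  have "(Inl (ws0 j), Inr (ws1 j)) \<in> ({(Inl (ws0 j), Inr (ws1 j)) | j. True} \<union> {(Inl (ws0 j), Inr (ws1 j)) | j. True}\<inverse>)\<^sup>*"
    by (rule r_into_rtrancl) auto
  then show ?thesis
    using ident[unfolded is_identification_def, rule_format, OF VD_Inl VD_Inr] by simp
qed

lemma wd:
  assumes c: "cons z" and x: "x \<in> VD" and y: "y \<in> VD" and pxy: "\<pi> x = \<pi> y"
  shows "z $ x = z $ y"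
proof -
  let ?R = "{(Inl (ws0 j), Inr (ws1 j)) | j. True}"
  have stp: "z $ a = z $ b" if "(a, b) \<in> ?R \<union> ?R\<inverse>" for a b
  proof -
    have "z $ Inl (ws0 j) = z $ Inr (ws1 j)" for j
      using c by (simp add: vec_eq_iff)
    then show ?thesis using that by auto
  qed
  have "(x, y) \<in> (?R \<union> ?R\<inverse>)\<^sup>*"
    using ident[unfolded is_identification_def, rule_format, OF x y] pxy by simp
  then show ?thesis
  proof (induction rule: rtrancl_induct)
    case base then show ?case by simp
  next
    case (step b c) then show ?case using stp[of b c] by simp
  qed
qed

lemma P_nth:
  assumes c: "cons z" and x: "x \<in> VD"
  shows "Pm \<pi> VD z $ \<pi> x = z $ x"
proof -
  let ?x = "SOME x'. x' \<in> VD \<and> \<pi> x' = \<pi> x"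
  have "?x \<in> VD \<and> \<pi> ?x = \<pi> x" by (rule someI[of _ x]) (use x in simp)
  then have "z $ ?x = z $ x" using wd[OF c] x by blast
  then show ?thesis using x by (simp add: Pm_def)
qed

lemma PQ:
  assumes "\<phi> \<in> conf (push_linkage \<pi> (disj_union L0 L1))"
  shows "Pm \<pi> VD (Qm \<pi> VD \<phi>) = \<phi>"
proof -
  have z: "\<phi> $ c = 0" if "c \<notin> \<pi> ` VD" for c using assms that unfolding conf_def by simp
  have "Pm \<pi> VD (Qm \<pi> VD \<phi>) $ c = \<phi> $ c" for c
    proof (cases "c \<in> \<pi> ` VD")
      case True
      let ?x = "SOME x'. x' \<in> VD \<and> \<pi> x' = c"
      from True obtain x0 where x0: "x0 \<in> VD" "c = \<pi> x0" by blast
      have "?x \<in> VD \<and> \<pi> ?x = c" by (rule someI[of _ x0]) (use x0 in simp)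
      then have "Qm \<pi> VD \<phi> $ ?x = \<phi> $ c" by (simp add: Qm_def)
      then show ?thesis using True unfolding Pm_def by simp
    next
      case False then show ?thesis using z by (simp add: Pm_def)
    qed
  then show ?thesis by (simp add: vec_eq_iff)
qed

lemma QP:
  assumes "z \<in> conf (disj_union L0 L1)" "cons z"
  shows "Qm \<pi> VD (Pm \<pi> VD z) = z"
proof -
  have z: "z $ x = 0" if "x \<notin> VD" for x using assms that unfolding conf_def by simp
  show ?thesis unfolding vec_eq_iff
    using z P_nth[OF assms(2)] by (simp add: Qm_def)
qed

lemma Q_conf:
  assumes "\<phi> \<in> conf (push_linkage \<pi> (disj_union L0 L1))"
  shows "Qm \<pi> VD \<phi> \<in> conf (disj_union L0 L1) \<and> cons (Qm \<pi> VD \<phi>)"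
proof
  show "cons (Qm \<pi> VD \<phi>)"
    using pi_glue VD_Inl VD_Inr by (simp add: vec_eq_iff Qm_nth)
  show "Qm \<pi> VD \<phi> \<in> conf (disj_union L0 L1)"
    unfolding conf_def
  proof (intro CollectI conjI allI impI ballI)
    fix v assume "v \<notin> VD" then show "Qm \<pi> VD \<phi> $ v = 0" by (simp add: Qm_def)
  next
    fix vx assume vx: "vx \<in> pins (disj_union L0 L1)"
    obtain v x where vx': "vx = (v, x)" by (cases vx)
    have "v \<in> VD" using pins_VD vx vx' by blast
    moreover have "(\<pi> v, x) \<in> pins (push_linkage \<pi> (disj_union L0 L1))"
      using vx vx' by force
    ultimately show "case vx of (v, x) \<Rightarrow> Qm \<pi> VD \<phi> $ v = x"
      using assms vx' unfolding conf_def by (auto simp: Qm_nth)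
  next
    fix e assume e: "e \<in> flex (disj_union L0 L1)"
    then have "e \<in> edges (disj_union L0 L1)" using flex_edges by blast
    then show "dist (Qm \<pi> VD \<phi> $ fst (ends (disj_union L0 L1) e)) (Qm \<pi> VD \<phi> $ snd (ends (disj_union L0 L1) e))
        \<le> len (disj_union L0 L1) e"
      using conf_flexD[OF assms, of e] e ends_VD by (simp add: Qm_nth split_beta map_prod_def)
  next
    fix e assume e: "e \<in> edges (disj_union L0 L1) - flex (disj_union L0 L1)"
    then show "dist (Qm \<pi> VD \<phi> $ fst (ends (disj_union L0 L1) e)) (Qm \<pi> VD \<phi> $ snd (ends (disj_union L0 L1) e))
        = len (disj_union L0 L1) e"
      using conf_rigidD[OF assms, of e] e ends_VD by (simp add: Qm_nth split_beta map_prod_def)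
  qed
qed

lemma P_conf:
  assumes zc: "z \<in> conf (disj_union L0 L1)" and c: "cons z"
  shows "Pm \<pi> VD z \<in> conf (push_linkage \<pi> (disj_union L0 L1))"
  unfolding conf_def
proof (intro CollectI conjI allI impI ballI)
  fix c assume "c \<notin> verts (push_linkage \<pi> (disj_union L0 L1))"
  then show "Pm \<pi> VD z $ c = 0" by (simp add: Pm_def)
next
  fix cx assume cx: "cx \<in> pins (push_linkage \<pi> (disj_union L0 L1))"
  then obtain v x where vx: "(v, x) \<in> pins (disj_union L0 L1)" "cx = (\<pi> v, x)" by auto
  have "v \<in> VD" using pins_VD vx by blast
  then show "case cx of (c, x) \<Rightarrow> Pm \<pi> VD z $ c = x"
    using vx conf_pinD[OF zc vx(1)] P_nth[OF c] by simp
next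
  fix e assume e: "e \<in> flex (push_linkage \<pi> (disj_union L0 L1))"
  then have e': "e \<in> edges (disj_union L0 L1)" "e \<in> flex (disj_union L0 L1)" using flex_edges by auto
  then show "dist (Pm \<pi> VD z $ fst (ends (push_linkage \<pi> (disj_union L0 L1)) e))
      (Pm \<pi> VD z $ snd (ends (push_linkage \<pi> (disj_union L0 L1)) e)) \<le> len (push_linkage \<pi> (disj_union L0 L1)) e"
    using conf_flexD[OF zc e'(2)] ends_VD[OF e'(1)] P_nth[OF c] by (simp add: split_beta map_prod_def)
next
  fix e assume e: "e \<in> edges (push_linkage \<pi> (disj_union L0 L1)) - flex (push_linkage \<pi> (disj_union L0 L1))"
  then have e': "e \<in> edges (disj_union L0 L1)" "e \<notin> flex (disj_union L0 L1)" by auto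
  then show "dist (Pm \<pi> VD z $ fst (ends (push_linkage \<pi> (disj_union L0 L1)) e))
      (Pm \<pi> VD z $ snd (ends (push_linkage \<pi> (disj_union L0 L1)) e)) = len (push_linkage \<pi> (disj_union L0 L1)) e"
    using conf_rigidD[OF zc e'] ends_VD[OF e'(1)] P_nth[OF c] by (simp add: split_beta map_prod_def)
qed

end

lemma adj_id: "\<And>u y. (\<lambda>x. x) u \<bullet> y = u \<bullet> (\<lambda>x. x) y" "inj_on (\<lambda>x. x) Basis" "(\<lambda>x. x) ` Basis \<subseteq> Basis"
  by auto

context
  fixes L0 :: "('v::finite, 'e0, real^'n) linkage" and L1 :: "('w::finite, 'e1, real^'n) linkage"
    and ws0 :: "'k::finite \<Rightarrow> 'v" and ws1 :: "'k \<Rightarrow> 'w" and \<pi> :: "'v + 'w \<Rightarrow> 'c::finite"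
  assumes cab0: "cabled_linkage L0" and cab1: "cabled_linkage L1"
    and rw0: "range ws0 \<subseteq> verts L0" and rw1: "range ws1 \<subseteq> verts L1"
    and ident: "is_identification \<pi> (verts (disj_union L0 L1)) {(Inl (ws0 j), Inr (ws1 j)) | j. True}"
begin

abbreviation "VD' \<equiv> verts (disj_union L0 L1)"
abbreviation "L' \<equiv> push_linkage \<pi> (disj_union L0 L1)"
abbreviation "ws' \<equiv> (\<lambda>j. \<pi> (Inl (ws0 j)))"

lemmas ctx = cab0 cab1 rw0 rw1 ident

lemma VD_Inl': "Inl (ws0 j) \<in> VD'"
  using rw0 by (auto simp: disj_union_def)

lemma ev_Q: "evmap ws' \<phi> = evmap ws0 (vleft (Qm \<pi> VD' \<phi>))"
  by (simp add: vec_eq_iff Qm_nth VD_Inl')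

lemma ev_P: "evmap ws0 (vleft z) = evmap ws1 (vright z) \<Longrightarrow> evmap ws' (Pm \<pi> VD' z) = evmap ws0 (vleft z)"
  by (simp add: vec_eq_iff P_nth[OF ctx] VD_Inl')

lemma ev_vs_Q:
  assumes "range vs0 \<subseteq> verts L0" "range vs1 \<subseteq> verts L1"
  shows "evmap (case_sum (\<pi> \<circ> Inl \<circ> vs0) (\<pi> \<circ> Inr \<circ> vs1)) \<phi> =
    vjoin (evmap vs0 (vleft (Qm \<pi> VD' \<phi>))) (evmap vs1 (vright (Qm \<pi> VD' \<phi>)))"
proof -
  have "Inl (vs0 i) \<in> VD'" "Inr (vs1 j) \<in> VD'" for i j using assms by (auto simp: disj_union_def)
  then show ?thesis by (simp add: vec_eq_iff vjoin_def Qm_nth split: sum.split)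
qed

lemma part2_quasi:
  assumes Q0: "quasifunctional L0 ws0 vs0 f0" and Q1: "quasifunctional L1 ws1 vs1 f1"
  shows "quasifunctional L' ws' (case_sum (\<pi> \<circ> Inl \<circ> vs0) (\<pi> \<circ> Inr \<circ> vs1)) (\<lambda>x. vjoin (f0 x) (f1 x))"
  unfolding quasifunctional_def
proof (intro conjI ballI)
  have rv: "range vs0 \<subseteq> verts L0" "range vs1 \<subseteq> verts L1"
    using Q0 Q1 unfolding quasifunctional_def by simp_all
  show "range ws' \<subseteq> verts L'" using VD_Inl' by auto
  show "range (case_sum (\<pi> \<circ> Inl \<circ> vs0) (\<pi> \<circ> Inr \<circ> vs1)) \<subseteq> verts L'"
    using rv by (auto simp: disj_union_def image_subset_iff split: sum.split)
  fix \<phi> assume \<phi>: "\<phi> \<in> conf L'"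
  have z: "Qm \<pi> VD' \<phi> \<in> conf (disj_union L0 L1)"
    "evmap ws0 (vleft (Qm \<pi> VD' \<phi>)) = evmap ws1 (vright (Qm \<pi> VD' \<phi>))"
    using Q_conf[OF ctx \<phi>] by auto
  then have "vleft (Qm \<pi> VD' \<phi>) \<in> conf L0" "vright (Qm \<pi> VD' \<phi>) \<in> conf L1"
    by (auto simp: conf_disj)
  then show "evmap (case_sum (\<pi> \<circ> Inl \<circ> vs0) (\<pi> \<circ> Inr \<circ> vs1)) \<phi> =
      vjoin (f0 (evmap ws' \<phi>)) (f1 (evmap ws' \<phi>))"
    using Q0 Q1 z(2) unfolding quasifunctional_def by (simp add: ev_vs_Q[OF rv] ev_Q)
qed

lemma part2_Usub:
  assumes "U0 \<subseteq> evmap ws0 ` conf L0" "U1 \<subseteq> evmap ws1 ` conf L1"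
  shows "U0 \<inter> U1 \<subseteq> evmap ws' ` conf L'"
proof
  fix u assume u: "u \<in> U0 \<inter> U1"
  obtain \<phi>0 \<phi>1 where p: "\<phi>0 \<in> conf L0" "u = evmap ws0 \<phi>0" "\<phi>1 \<in> conf L1" "u = evmap ws1 \<phi>1"
    using assms u by blast
  have c: "evmap ws0 (vleft (vjoin \<phi>0 \<phi>1)) = evmap ws1 (vright (vjoin \<phi>0 \<phi>1))" using p by simp
  have "vjoin \<phi>0 \<phi>1 \<in> conf (disj_union L0 L1)" using p by (simp add: conf_disj_vjoin)
  then have "Pm \<pi> VD' (vjoin \<phi>0 \<phi>1) \<in> conf L'" using P_conf[OF ctx _ c] by blast
  moreover have "evmap ws' (Pm \<pi> VD' (vjoin \<phi>0 \<phi>1)) = u" using ev_P[OF c] p by simp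
  ultimately show "u \<in> evmap ws' ` conf L'" by blast
qed

lemma linear_J0: "linear (\<lambda>a. Pm \<pi> VD' (vjoin a (0::(real^'n)^'w)))"
  using linear_compose[OF linear_vjoinL linear_Pm] by (simp add: o_def)

lemma linear_J1: "linear (\<lambda>b. Pm \<pi> VD' (vjoin (0::(real^'n)^'v) b))"
  using linear_compose[OF linear_vjoinR linear_Pm] by (simp add: o_def)

lemma linear_K0: "linear (\<lambda>\<phi>. vleft (Qm \<pi> VD' \<phi>) :: (real^'n)^'v)"
  using linear_compose[OF linear_Qm linear_vleft] by (simp add: o_def)

lemma linear_K1: "linear (\<lambda>\<phi>. vright (Qm \<pi> VD' \<phi>) :: (real^'n)^'w)"
  using linear_compose[OF linear_Qm linear_vright] by (simp add: o_def)

lemma J_add: "Pm \<pi> VD' (vjoin a 0) + Pm \<pi> VD' (vjoin 0 b) = Pm \<pi> VD' (vjoin a b)"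
  for a :: "(real^'n)^'v" and b :: "(real^'n)^'w"
  using linear_add[OF linear_Pm, of \<pi> VD' "vjoin a 0" "vjoin 0 b"] by (simp add: vjoin_add)


lemma K_facts:
  assumes \<phi>: "\<phi> \<in> conf L'"
  shows "vleft (Qm \<pi> VD' \<phi>) \<in> conf L0 \<and> vright (Qm \<pi> VD' \<phi>) \<in> conf L1 \<and>
    Pm \<pi> VD' (vjoin (vleft (Qm \<pi> VD' \<phi>)) 0) + Pm \<pi> VD' (vjoin 0 (vright (Qm \<pi> VD' \<phi>))) = \<phi> \<and>
    evmap ws' \<phi> = evmap ws0 (vleft (Qm \<pi> VD' \<phi>)) \<and> evmap ws' \<phi> = evmap ws1 (vright (Qm \<pi> VD' \<phi>))"
proof -
  have z: "Qm \<pi> VD' \<phi> \<in> conf (disj_union L0 L1)"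
    "evmap ws0 (vleft (Qm \<pi> VD' \<phi>)) = evmap ws1 (vright (Qm \<pi> VD' \<phi>))"
    using Q_conf[OF ctx \<phi>] by auto
  then show ?thesis using PQ[OF ctx \<phi>] by (simp add: conf_disj J_add vjoin_split ev_Q)
qed

lemma part2_strong:
  assumes F0: "strongly_functional_rd L0 ws0 vs0 f0 U0" and F1: "strongly_functional_rd L1 ws1 vs1 f1 U1"
  shows "strongly_functional_rd L' ws' (case_sum (\<pi> \<circ> Inl \<circ> vs0) (\<pi> \<circ> Inr \<circ> vs1))
           (\<lambda>x. vjoin (f0 x) (f1 x)) (U0 \<inter> U1)"
proof -
  have I0: "analytic_iso (conf L0) (evmap ws0 ` conf L0) (evmap ws0)"
    using F0 unfolding strongly_functional_rd_def by simp
  have I1: "analytic_iso (conf L1) (evmap ws1 ` conf L1) (evmap ws1)"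
    using F1 unfolding strongly_functional_rd_def by simp
  have "analytic_iso (conf L') (evmap ws' ` conf L') (evmap ws')"
    by (rule strong_combine[OF I0 I1 linear_evmap linear_ident' linear_ident' linear_J0 linear_J1
        adj_id adj_id K_facts])
  moreover have "quasifunctional L' ws' (case_sum (\<pi> \<circ> Inl \<circ> vs0) (\<pi> \<circ> Inr \<circ> vs1))
           (\<lambda>x. vjoin (f0 x) (f1 x))"
    using F0 F1 unfolding strongly_functional_rd_def by (intro part2_quasi) simp_all
  moreover have "U0 \<inter> U1 \<subseteq> evmap ws' ` conf L'"
    using F0 F1 unfolding strongly_functional_rd_def by (intro part2_Usub) simp_all
  ultimately show ?thesis unfolding strongly_functional_rd_def by blast
qed

lemma part2_func:
  assumes F0: "functional_rd L0 ws0 vs0 f0 U0" and F1: "functional_rd L1 ws1 vs1 f1 U1"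
  shows "functional_rd L' ws' (case_sum (\<pi> \<circ> Inl \<circ> vs0) (\<pi> \<circ> Inr \<circ> vs1))
           (\<lambda>x. vjoin (f0 x) (f1 x)) (U0 \<inter> U1)"
proof -
  obtain E0 :: "real set" and \<sigma>0 where S0: "finite E0"
      "analytic_iso (U0 \<times> E0) {\<phi>\<in>conf L0. evmap ws0 \<phi> \<in> U0} \<sigma>0"
      "\<forall>u\<in>U0. \<forall>c\<in>E0. evmap ws0 (\<sigma>0 (u, c)) = u"
    using F0 unfolding functional_rd_def by blast
  obtain E1 :: "real set" and \<sigma>1 where S1: "finite E1"
      "analytic_iso (U1 \<times> E1) {\<phi>\<in>conf L1. evmap ws1 \<phi> \<in> U1} \<sigma>1"
      "\<forall>u\<in>U1. \<forall>c\<in>E1. evmap ws1 (\<sigma>1 (u, c)) = u"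
    using F1 unfolding functional_rd_def by blast
  have Ui: "\<And>u. u \<in> U0 \<inter> U1 \<Longrightarrow> u \<in> U0 \<and> u \<in> U1" by auto
  have Jok: "\<And>u \<phi>0 \<phi>1. u \<in> U0 \<inter> U1 \<Longrightarrow> \<phi>0 \<in> {\<phi>\<in>conf L0. evmap ws0 \<phi> \<in> U0} \<Longrightarrow>
      \<phi>1 \<in> {\<phi>\<in>conf L1. evmap ws1 \<phi> \<in> U1} \<Longrightarrow> evmap ws0 \<phi>0 = u \<Longrightarrow> evmap ws1 \<phi>1 = u \<Longrightarrow>
      Pm \<pi> VD' (vjoin \<phi>0 0) + Pm \<pi> VD' (vjoin 0 \<phi>1) \<in> {\<phi>\<in>conf L'. evmap ws' \<phi> \<in> U0 \<inter> U1} \<and>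
      evmap ws' (Pm \<pi> VD' (vjoin \<phi>0 0) + Pm \<pi> VD' (vjoin 0 \<phi>1)) = u \<and>
      vleft (Qm \<pi> VD' (Pm \<pi> VD' (vjoin \<phi>0 0) + Pm \<pi> VD' (vjoin 0 \<phi>1))) = \<phi>0 \<and>
      vright (Qm \<pi> VD' (Pm \<pi> VD' (vjoin \<phi>0 0) + Pm \<pi> VD' (vjoin 0 \<phi>1))) = \<phi>1"
  proof -
    fix u \<phi>0 \<phi>1
    assume u: "u \<in> U0 \<inter> U1" and p0: "\<phi>0 \<in> {\<phi>\<in>conf L0. evmap ws0 \<phi> \<in> U0}"
      and p1: "\<phi>1 \<in> {\<phi>\<in>conf L1. evmap ws1 \<phi> \<in> U1}" and e0: "evmap ws0 \<phi>0 = u" and e1: "evmap ws1 \<phi>1 = u"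
    have c: "evmap ws0 (vleft (vjoin \<phi>0 \<phi>1)) = evmap ws1 (vright (vjoin \<phi>0 \<phi>1))" using e0 e1 by simp
    have zc: "vjoin \<phi>0 \<phi>1 \<in> conf (disj_union L0 L1)" using p0 p1 by (simp add: conf_disj_vjoin)
    have "Pm \<pi> VD' (vjoin \<phi>0 \<phi>1) \<in> conf L'" by (rule P_conf[OF ctx zc c])
    moreover have "evmap ws' (Pm \<pi> VD' (vjoin \<phi>0 \<phi>1)) = u" using ev_P[OF c] e0 by simp
    moreover have "Qm \<pi> VD' (Pm \<pi> VD' (vjoin \<phi>0 \<phi>1)) = vjoin \<phi>0 \<phi>1" by (rule QP[OF ctx zc c])
    ultimately show "?thesis u \<phi>0 \<phi>1" using u by (simp add: J_add)
  qed
  have Kok: "\<And>\<phi>. \<phi> \<in> {\<phi>\<in>conf L'. evmap ws' \<phi> \<in> U0 \<inter> U1} \<Longrightarrow>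
      vleft (Qm \<pi> VD' \<phi>) \<in> {\<phi>\<in>conf L0. evmap ws0 \<phi> \<in> U0} \<and>
      vright (Qm \<pi> VD' \<phi>) \<in> {\<phi>\<in>conf L1. evmap ws1 \<phi> \<in> U1} \<and>
      Pm \<pi> VD' (vjoin (vleft (Qm \<pi> VD' \<phi>)) 0) + Pm \<pi> VD' (vjoin 0 (vright (Qm \<pi> VD' \<phi>))) = \<phi> \<and>
      evmap ws' \<phi> \<in> U0 \<inter> U1 \<and>
      evmap ws' \<phi> = evmap ws0 (vleft (Qm \<pi> VD' \<phi>)) \<and> evmap ws' \<phi> = evmap ws1 (vright (Qm \<pi> VD' \<phi>))"
  proof -
    fix \<phi> assume \<phi>: "\<phi> \<in> {\<phi>\<in>conf L'. evmap ws' \<phi> \<in> U0 \<inter> U1}"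
    then have "\<phi> \<in> conf L'" by simp
    note K = K_facts[OF this]
    show "?thesis \<phi>" using K \<phi> by auto
  qed
  have "\<exists>(E :: real set) \<sigma>. finite E \<and> analytic_iso ((U0 \<inter> U1) \<times> E) {\<phi>\<in>conf L'. evmap ws' \<phi> \<in> U0 \<inter> U1} \<sigma> \<and>
      (\<forall>u\<in>U0 \<inter> U1. \<forall>c\<in>E. evmap ws' (\<sigma> (u, c)) = u)"
    by (rule functional_combine[OF S0 S1 linear_evmap linear_ident' linear_ident' linear_J0 linear_J1
        linear_K0 linear_K1 adj_id adj_id Ui Jok Kok])
  moreover have "quasifunctional L' ws' (case_sum (\<pi> \<circ> Inl \<circ> vs0) (\<pi> \<circ> Inr \<circ> vs1))
           (\<lambda>x. vjoin (f0 x) (f1 x))"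
    using F0 F1 unfolding functional_rd_def by (intro part2_quasi) simp_all
  moreover have "U0 \<inter> U1 \<subseteq> evmap ws' ` conf L'"
    using F0 F1 unfolding functional_rd_def by (intro part2_Usub) simp_all
  ultimately show ?thesis unfolding functional_rd_def by blast
qed

end

theorem lemma4p2:
  fixes L0 :: "('v::finite, 'e0, real^'n) linkage"
    and L1 :: "('w::finite, 'e1, real^'n) linkage"
  assumes "cabled_linkage L0" and "cabled_linkage L1"
  shows
   "(\<forall>(ws0 :: 'k0::finite \<Rightarrow> 'v) (vs0 :: 'm0::finite \<Rightarrow> 'v) f0 U0
       (ws1 :: 'k1::finite \<Rightarrow> 'w) (vs1 :: 'm1::finite \<Rightarrow> 'w) f1 U1.
      (functional_rd L0 ws0 vs0 f0 U0 \<and> functional_rd L1 ws1 vs1 f1 U1 \<longrightarrow>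
         functional_rd (disj_union L0 L1)
           (case_sum (Inl \<circ> ws0) (Inr \<circ> ws1)) (case_sum (Inl \<circ> vs0) (Inr \<circ> vs1))
           (\<lambda>x. vjoin (f0 (vleft x)) (f1 (vright x)))
           ((\<lambda>(a, b). vjoin a b) ` (U0 \<times> U1))) \<and>
      (strongly_functional_rd L0 ws0 vs0 f0 U0 \<and> strongly_functional_rd L1 ws1 vs1 f1 U1 \<longrightarrow>
         strongly_functional_rd (disj_union L0 L1)
           (case_sum (Inl \<circ> ws0) (Inr \<circ> ws1)) (case_sum (Inl \<circ> vs0) (Inr \<circ> vs1))
           (\<lambda>x. vjoin (f0 (vleft x)) (f1 (vright x)))
           ((\<lambda>(a, b). vjoin a b) ` (U0 \<times> U1)))) \<and>
    (\<forall>(ws0 :: 'k::finite \<Rightarrow> 'v) (vs0 :: 'l0::finite \<Rightarrow> 'v) f0 U0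
       (ws1 :: 'k \<Rightarrow> 'w) (vs1 :: 'l1::finite \<Rightarrow> 'w) f1 U1 (\<pi> :: 'v + 'w \<Rightarrow> 'c::finite).
      is_identification \<pi> (verts (disj_union L0 L1)) {(Inl (ws0 j), Inr (ws1 j)) | j. True} \<longrightarrow>
      (functional_rd L0 ws0 vs0 f0 U0 \<and> functional_rd L1 ws1 vs1 f1 U1 \<longrightarrow>
         functional_rd (push_linkage \<pi> (disj_union L0 L1))
           (\<lambda>j. \<pi> (Inl (ws0 j))) (case_sum (\<pi> \<circ> Inl \<circ> vs0) (\<pi> \<circ> Inr \<circ> vs1))
           (\<lambda>x. vjoin (f0 x) (f1 x)) (U0 \<inter> U1)) \<and>
      (strongly_functional_rd L0 ws0 vs0 f0 U0 \<and> strongly_functional_rd L1 ws1 vs1 f1 U1 \<longrightarrow>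
         strongly_functional_rd (push_linkage \<pi> (disj_union L0 L1))
           (\<lambda>j. \<pi> (Inl (ws0 j))) (case_sum (\<pi> \<circ> Inl \<circ> vs0) (\<pi> \<circ> Inr \<circ> vs1))
           (\<lambda>x. vjoin (f0 x) (f1 x)) (U0 \<inter> U1)))"
proof (intro conjI allI impI)
  fix ws0 :: "'k0 \<Rightarrow> 'v" and vs0 :: "'m0 \<Rightarrow> 'v" and f0 U0 and ws1 :: "'k1 \<Rightarrow> 'w" and vs1 :: "'m1 \<Rightarrow> 'w" and f1 U1
  assume H: "functional_rd L0 ws0 vs0 f0 U0 \<and> functional_rd L1 ws1 vs1 f1 U1"
  then show "functional_rd (disj_union L0 L1)
           (case_sum (Inl \<circ> ws0) (Inr \<circ> ws1)) (case_sum (Inl \<circ> vs0) (Inr \<circ> vs1))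
           (\<lambda>x. vjoin (f0 (vleft x)) (f1 (vright x)))
           ((\<lambda>(a, b). vjoin a b) ` (U0 \<times> U1))"
    using part1_func by blast
next
  fix ws0 :: "'k0 \<Rightarrow> 'v" and vs0 :: "'m0 \<Rightarrow> 'v" and f0 U0 and ws1 :: "'k1 \<Rightarrow> 'w" and vs1 :: "'m1 \<Rightarrow> 'w" and f1 U1
  assume H: "strongly_functional_rd L0 ws0 vs0 f0 U0 \<and> strongly_functional_rd L1 ws1 vs1 f1 U1"
  then show "strongly_functional_rd (disj_union L0 L1)
           (case_sum (Inl \<circ> ws0) (Inr \<circ> ws1)) (case_sum (Inl \<circ> vs0) (Inr \<circ> vs1))
           (\<lambda>x. vjoin (f0 (vleft x)) (f1 (vright x)))
           ((\<lambda>(a, b). vjoin a b) ` (U0 \<times> U1))"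
    using part1_strong by blast
next
  fix ws0 :: "'k \<Rightarrow> 'v" and vs0 :: "'l0 \<Rightarrow> 'v" and f0 U0 and ws1 :: "'k \<Rightarrow> 'w" and vs1 :: "'l1 \<Rightarrow> 'w"
    and f1 U1 and \<pi> :: "'v + 'w \<Rightarrow> 'c"
  assume ident: "is_identification \<pi> (verts (disj_union L0 L1)) {(Inl (ws0 j), Inr (ws1 j)) | j. True}"
  {
    assume H: "functional_rd L0 ws0 vs0 f0 U0 \<and> functional_rd L1 ws1 vs1 f1 U1"
    then have r: "range ws0 \<subseteq> verts L0" "range ws1 \<subseteq> verts L1"
      unfolding functional_rd_def quasifunctional_def by simp_all
    show "functional_rd (push_linkage \<pi> (disj_union L0 L1))
           (\<lambda>j. \<pi> (Inl (ws0 j))) (case_sum (\<pi> \<circ> Inl \<circ> vs0) (\<pi> \<circ> Inr \<circ> vs1))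
           (\<lambda>x. vjoin (f0 x) (f1 x)) (U0 \<inter> U1)"
      using part2_func[OF assms(1,2) r ident] H by blast
  }
  {
    assume H: "strongly_functional_rd L0 ws0 vs0 f0 U0 \<and> strongly_functional_rd L1 ws1 vs1 f1 U1"
    then have r: "range ws0 \<subseteq> verts L0" "range ws1 \<subseteq> verts L1"
      unfolding strongly_functional_rd_def quasifunctional_def by simp_all
    show "strongly_functional_rd (push_linkage \<pi> (disj_union L0 L1))
           (\<lambda>j. \<pi> (Inl (ws0 j))) (case_sum (\<pi> \<circ> Inl \<circ> vs0) (\<pi> \<circ> Inr \<circ> vs1))
           (\<lambda>x. vjoin (f0 x) (f1 x)) (U0 \<inter> U1)"
      using part2_strong[OF assms(1,2) r ident] H by blast
  }
qed

end
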